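(* Assume the Standing setup and the Time series setup, and suppose that $R(z)$ is analytic on $\mathcal V_\epsilon\cup\mathcal W_\theta$ for some $\epsilon>0$ and some $\theta>0$. Then for every integer $t\ge 0$ the series below converge and $$x(t)=\sum_{k\ge1}(-1)^kT_{-k}\nabla^{-k}g_+(t)-U_tC_1c+\sum_{\ell\ge0}(-1)^\ell T_\ell\nabla^\ell g_+(t)-V_tC_1c .$$
   Context: Standing setup. Let $X,Y$ be complex Banach spaces, let $\mathcal B(X,Y)$ denote the bounded linear operators from $X$ to $Y$ ($\mathcal B(X)=\mathcal B(X,X)$), and let $I_X$ be the identity on $X$. Let $A_0,A_1\in\mathcal B(X,Y)$, let $A(z)=A_0+A_1z$ ($z\in\mathbb C$), and set $C_0=A_0+A_1$, $C_1=A_1$, so that $A(z)=C_0+C_1(z-1)$. Let $R(z)=A(z)^{-1}\in\mathcal B(Y,X)$ where this inverse exists. For $\epsilon>0$ let $\mathcal V_\epsilon=\{z\in\mathbb C:|z|<1+\epsilon,\ z\ne1\}$, and for $\theta>0$ let $\mathcal W_\theta=\{z\in\mathbb C:0<|z-1|<1+\theta\}$. If $R$ is analytic on $\mathcal V_\epsilon$ then it has a Laurent expansion $R(z)=\sum_{j\in\mathbb Z}T_j(z-1)^j$ on $0<|z-1|<\epsilon$ with $T_j\in\mathcal B(Y,X)$, and (known facts) $T_{-k}=(-1)^{k-1}(T_{-1}C_0)^{k-1}T_{-1}$ for $k\ge1$, $T_\ell=(-1)^\ell(T_0C_1)^\ell T_0$ for $\ell\ge0$, $\|(T_{-1}C_0)^k\|^{1/k}\to0$,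 $T_{-1}C_1+T_0C_0=I_X$, $C_1T_{-1}+C_0T_0=I_Y$, $T_{-1}C_iT_0=0$ and $T_0C_iT_{-1}=0$ for $i=0,1$; moreover $P=T_{-1}C_1$ and $P^c=I_X-P=T_0C_0$ are complementary projections on $X$ and $Q=C_1T_{-1}$, $Q^c=I_Y-Q=C_0T_0$ are complementary projections on $Y$. The singular part $R_{\rm sin}(z)=\sum_{k\ge1}T_{-k}(z-1)^{-k}$ converges for all $z\ne1$ and the regular part is $R_{\rm reg}(z)=\sum_{\ell\ge0}T_\ell(z-1)^\ell$. Define, for integers $s\ge0$, $U_s=-(I_X-T_{-1}C_0)^{-s-1}T_{-1}$ (these are the Maclaurin coefficients of $R_{\rm sin}$) and, whenever $I_X-T_0C_1$ is invertible, $V_s=(-1)^s(I_X-T_0C_1)^{-s-1}(T_0C_1)^sT_0$. Time series setup. Let $(\Omega,\Sigma,\mu)$ be a probability space and $\{n(t)\}_{t\in\mathbb Z}$ a sequence of i.i.d. $X$-valued (Bochner measurable) random variables with $\mathbb E\|n(t)\|^2<\infty$ and $\mathbb E[n(t)]=0$. Let $F_0,F_1\in\mathcal B(X,Y)$ and $g(t)=F_0n(t)+F_1n(t-1)$ for $t\in\mathbb Z$. The $X$-valued random sequence $\{x(t)\}_{t\ge-1}$ satisfies $x(-1)=c$ and $A_0x(t)+A_1x(t-1)=g(t)$ for every integer $t\ge0$. Let $g_+(t)=g(t)$ for $t\ge0$ and $g_+(t)=0$ for $t<0$. For integers $t\ge0$, $k\ge1$, $\ell\ge0$ write $\nabla^{-k}g_+(t)=\sum_{s=0}^t\binom{s+k-1}{s}g(t-s)$,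 $\nabla^\ell g_+(t)=\sum_{s=0}^{\min\{\ell,t\}}\binom{\ell}{s}(-1)^sg(t-s)$ and $\nabla^\ell g(t)=\sum_{s=0}^{\ell}\binom{\ell}{s}(-1)^sg(t-s)$. *)

theory Defs
  imports "HOL-Probability.Probability"
begin

text \<open>A complex Banach space is a real Banach space (type class banach) together with
  a bounded real-linear map J (multiplication by the imaginary unit) with J o J = -I and
  norm (c x) = cmod c * norm x for the induced complex scalar multiplication.\<close>

definition complex_structure :: "('x::real_normed_vector \<Rightarrow>\<^sub>L 'x) \<Rightarrow> bool" where
  "complex_structure J \<longleftrightarrow> J o\<^sub>L J = - id_blinfun \<and>
     (\<forall>(c::complex) x. norm (Re c *\<^sub>R x + Im c *\<^sub>R blinfun_apply J x) = cmod c * norm x)"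

definition cscale :: "('x::real_normed_vector \<Rightarrow>\<^sub>L 'x) \<Rightarrow> complex \<Rightarrow> 'x \<Rightarrow> 'x" where
  "cscale J c x = Re c *\<^sub>R x + Im c *\<^sub>R blinfun_apply J x"

definition cscale_op :: "('y::real_normed_vector \<Rightarrow>\<^sub>L 'y) \<Rightarrow> complex \<Rightarrow> ('x::real_normed_vector \<Rightarrow>\<^sub>L 'y) \<Rightarrow> ('x \<Rightarrow>\<^sub>L 'y)" where
  "cscale_op J c A = Re c *\<^sub>R A + Im c *\<^sub>R (J o\<^sub>L A)"

text \<open>membership in B(X,Y): bounded and complex linear\<close>
definition clinear_op :: "('x::real_normed_vector \<Rightarrow>\<^sub>L 'x) \<Rightarrow> ('y::real_normed_vector \<Rightarrow>\<^sub>L 'y) \<Rightarrow> ('x \<Rightarrow>\<^sub>L 'y) \<Rightarrow> bool" where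
  "clinear_op JX JY A \<longleftrightarrow> A o\<^sub>L JX = JY o\<^sub>L A"

text \<open>inverse of a bounded operator (meaningful when it exists)\<close>
definition op_inv :: "('x::real_normed_vector \<Rightarrow>\<^sub>L 'y::real_normed_vector) \<Rightarrow> ('y \<Rightarrow>\<^sub>L 'x)" where
  "op_inv A = (THE B. B o\<^sub>L A = id_blinfun \<and> A o\<^sub>L B = id_blinfun)"

primrec op_pow :: "('x::real_normed_vector \<Rightarrow>\<^sub>L 'x) \<Rightarrow> nat \<Rightarrow> ('x \<Rightarrow>\<^sub>L 'x)" where
  "op_pow A 0 = id_blinfun"
| "op_pow A (Suc n) = A o\<^sub>L op_pow A n"

definition op_analytic_on :: "('x::real_normed_vector \<Rightarrow>\<^sub>L 'x) \<Rightarrow> (complex \<Rightarrow> ('y::real_normed_vector \<Rightarrow>\<^sub>L 'x)) \<Rightarrow> complex set \<Rightarrow> bool" where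
  "op_analytic_on JX R S \<longleftrightarrow> open S \<and>
     (\<forall>z\<in>S. \<exists>D. (R has_derivative (\<lambda>h. cscale_op JX h D)) (at z))"

definition V_set :: "real \<Rightarrow> complex set" where
  "V_set \<epsilon> = {z. cmod z < 1 + \<epsilon> \<and> z \<noteq> 1}"

definition W_set :: "real \<Rightarrow> complex set" where
  "W_set \<theta> = {z. 0 < cmod (z - 1) \<and> cmod (z - 1) < 1 + \<theta>}"

section \<open>Bochner measurability and mean zero (no separability assumed on X)\<close>

definition bochner_measurable :: "'a measure \<Rightarrow> ('a \<Rightarrow> 'x::real_normed_vector) \<Rightarrow> bool" where
  "bochner_measurable M f \<longleftrightarrow>
     (\<exists>s. (\<forall>i. simple_function M (s i)) \<and> (AE \<omega> in M. (\<lambda>i. s i \<omega>) \<longlonglongrightarrow> f \<omega>))"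

definition simple_integral_vec :: "'a measure \<Rightarrow> ('a \<Rightarrow> 'x::real_normed_vector) \<Rightarrow> 'x" where
  "simple_integral_vec M s = (\<Sum>y\<in>s ` space M. measure M (s -` {y} \<inter> space M) *\<^sub>R y)"

definition bochner_integral_is :: "'a measure \<Rightarrow> ('a \<Rightarrow> 'x::real_normed_vector) \<Rightarrow> 'x \<Rightarrow> bool" where
  "bochner_integral_is M f v \<longleftrightarrow>
     (\<exists>s. (\<forall>i. simple_function M (s i)) \<and> (AE \<omega> in M. (\<lambda>i. s i \<omega>) \<longlonglongrightarrow> f \<omega>) \<and>
          (\<lambda>i. \<integral>\<^sup>+ \<omega>. ennreal (norm (s i \<omega> - f \<omega>)) \<partial>M) \<longlonglongrightarrow> 0 \<and>
          (\<lambda>i. simple_integral_vec M (s i)) \<longlonglongrightarrow> v)"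

text \<open>\<nabla>^{-k} g_+(t) for k \<ge> 1, t \<ge> 0\<close>
definition nabla_neg :: "(int \<Rightarrow> 'y::real_vector) \<Rightarrow> nat \<Rightarrow> nat \<Rightarrow> 'y" where
  "nabla_neg g k t = (\<Sum>s=0..t. real ((s + k - 1) choose s) *\<^sub>R g (int t - int s))"

text \<open>\<nabla>^{l} g_+(t) for l \<ge> 0, t \<ge> 0\<close>
definition nabla_pos_plus :: "(int \<Rightarrow> 'y::real_vector) \<Rightarrow> nat \<Rightarrow> nat \<Rightarrow> 'y" where
  "nabla_pos_plus g l t = (\<Sum>s=0..min l t. (real (l choose s) * (-1) ^ s) *\<^sub>R g (int t - int s))"

end

theory Submission
  imports Defs
begin

section \<open>Complex structure algebra\<close>

definition LJ :: "('x::real_normed_vector \<Rightarrow>\<^sub>L 'x) \<Rightarrow> (('y::real_normed_vector \<Rightarrow>\<^sub>L 'x) \<Rightarrow>\<^sub>L ('y \<Rightarrow>\<^sub>L 'x))" where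
  "LJ J = Blinfun (\<lambda>A. J o\<^sub>L A)"

lemma LJ_apply[simp]: "blinfun_apply (LJ J) A = J o\<^sub>L A"
  unfolding LJ_def
  by (subst bounded_linear_Blinfun_apply)
     (auto intro: bounded_bilinear.bounded_linear_right[OF bounded_bilinear_blinfun_compose])

lemma cscale_op_eq: "cscale_op J c A = cscale (LJ J) c A"
  by (simp add: cscale_op_def cscale_def)

definition cstruct :: "('v::real_normed_vector \<Rightarrow>\<^sub>L 'v) \<Rightarrow> bool" where
  "cstruct J \<longleftrightarrow> J o\<^sub>L J = - id_blinfun \<and> (\<forall>c v. norm (cscale J c v) \<le> cmod c * norm v)"

lemma cscale_add_left: "cscale J (a + b) v = cscale J a v + cscale J b v"
  by (simp add: cscale_def algebra_simps)
lemma cscale_add_right: "cscale J a (v + w) = cscale J a v + cscale J a w"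
  by (simp add: cscale_def algebra_simps blinfun.add_right)
lemma cscale_diff_left: "cscale J (a - b) v = cscale J a v - cscale J b v"
  by (simp add: cscale_def algebra_simps)
lemma cscale_diff_right: "cscale J a (v - w) = cscale J a v - cscale J a w"
  by (simp add: cscale_def algebra_simps blinfun.diff_right)
lemma cscale_minus_left: "cscale J (- a) v = - cscale J a v"
  by (simp add: cscale_def algebra_simps)
lemma cscale_minus_right: "cscale J a (- v) = - cscale J a v"
  by (simp add: cscale_def algebra_simps blinfun.minus_right)
lemma cscale_zero_left[simp]: "cscale J 0 v = 0"
  by (simp add: cscale_def)
lemma cscale_zero_right[simp]: "cscale J a 0 = 0"
  by (simp add: cscale_def)
lemma cscale_of_real[simp]: "cscale J (of_real r) v = r *\<^sub>R v"
  by (simp add: cscale_def)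
lemma cscale_one[simp]: "cscale J 1 v = v"
  by (simp add: cscale_def)
lemma cscale_scaleR_right: "cscale J a (r *\<^sub>R v) = r *\<^sub>R cscale J a v"
  by (simp add: cscale_def algebra_simps blinfun.scaleR_right)
lemma cscale_sum_right: "cscale J a (sum f S) = (\<Sum>i\<in>S. cscale J a (f i))"
  by (induction S rule: infinite_finite_induct) (auto simp: cscale_add_right)
lemma cscale_sum_left: "cscale J (sum f S) v = (\<Sum>i\<in>S. cscale J (f i) v)"
  by (induction S rule: infinite_finite_induct) (auto simp: cscale_add_left)

lemma bounded_linear_cscale[intro, simp]: "bounded_linear (cscale J a)"
  unfolding cscale_def
  by (intro bounded_linear_add bounded_linear_compose[OF bounded_linear_scaleR_right blinfun.bounded_linear_right] bounded_linear_scaleR_right)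

lemma cscale_J_comm: "cscale J a (blinfun_apply J v) = blinfun_apply J (cscale J a v)"
  by (simp add: cscale_def blinfun.add_right blinfun.scaleR_right)

lemma JJ_apply: "J o\<^sub>L J = - id_blinfun \<Longrightarrow> blinfun_apply J (blinfun_apply J v) = - v"
  by (metis blinfun_apply_blinfun_compose blinfun.minus_left id_blinfun.rep_eq)

lemma cscale_mult:
  assumes "J o\<^sub>L J = - id_blinfun"
  shows "cscale J a (cscale J b v) = cscale J (a * b) v"
  using JJ_apply[OF assms, of v]
  by (simp add: cscale_def blinfun.add_right blinfun.scaleR_right algebra_simps scaleR_add_left[symmetric]
      del: scaleR_add_left)

lemma cscale_ii: "cscale J \<i> v = blinfun_apply J v"
  by (simp add: cscale_def)

lemma cstruct_JJ: "cstruct J \<Longrightarrow> J o\<^sub>L J = - id_blinfun"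
  by (simp add: cstruct_def)

lemma cscale_mult': "cstruct J \<Longrightarrow> cscale J a (cscale J b v) = cscale J (a * b) v"
  by (simp add: cstruct_def cscale_mult)

lemma norm_cscale:
  assumes "cstruct J"
  shows "norm (cscale J c v) = cmod c * norm v"
proof (cases "c = 0")
  case True then show ?thesis by simp
next
  case False
  have le: "\<And>c v. norm (cscale J c v) \<le> cmod c * norm v" using assms by (simp add: cstruct_def)
  have "v = cscale J (inverse c) (cscale J c v)"
    using False by (simp add: cscale_mult'[OF assms])
  then have "norm v \<le> cmod (inverse c) * norm (cscale J c v)"
    by (metis le)
  then have "norm v \<le> norm (cscale J c v) / cmod c"
    using False by (simp add: norm_inverse divide_inverse mult.commute)
  then have "cmod c * norm v \<le> norm (cscale J c v)"
    using False by (simp add: field_simps)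
  with le[of c v] show ?thesis by linarith
qed

lemma complex_structure_cstruct: "complex_structure J \<Longrightarrow> cstruct J"
  by (simp add: complex_structure_def cstruct_def cscale_def)

lemma cscale_LJ_apply: "blinfun_apply (cscale (LJ J) c A) y = cscale J c (blinfun_apply A y)"
  by (simp add: cscale_def blinfun.add_left blinfun.scaleR_left)

lemma cstruct_LJ:
  assumes "cstruct J"
  shows "cstruct (LJ J :: ('y::real_normed_vector \<Rightarrow>\<^sub>L 'x::real_normed_vector) \<Rightarrow>\<^sub>L _)"
proof -
  have 1: "LJ J o\<^sub>L LJ J = - (id_blinfun :: ('y \<Rightarrow>\<^sub>L 'x) \<Rightarrow>\<^sub>L _)"
    by (rule blinfun_eqI, rule blinfun_eqI)
       (simp add: JJ_apply[OF cstruct_JJ[OF assms]] blinfun.minus_left)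
  have 2: "norm (cscale (LJ J) c A) \<le> cmod c * norm A" for c and A :: "'y \<Rightarrow>\<^sub>L 'x"
  proof (rule norm_blinfun_bound)
    show "0 \<le> cmod c * norm A" by simp
    fix y
    have "norm (blinfun_apply (cscale (LJ J) c A) y) = cmod c * norm (blinfun_apply A y)"
      by (simp add: cscale_LJ_apply norm_cscale[OF assms])
    also have "\<dots> \<le> cmod c * (norm A * norm y)"
      by (simp add: mult_left_mono norm_blinfun)
    finally show "norm (blinfun_apply (cscale (LJ J) c A) y) \<le> cmod c * norm A * norm y"
      by (simp add: mult.assoc)
  qed
  show ?thesis using 1 2 by (simp add: cstruct_def)
qed

lemma clinear_apply:
  assumes "clinear_op JX JY A"
  shows "blinfun_apply A (cscale JX c v) = cscale JY c (blinfun_apply A v)"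
proof -
  have "blinfun_apply A (blinfun_apply JX v) = blinfun_apply JY (blinfun_apply A v)"
    using assms unfolding clinear_op_def by (metis blinfun_apply_blinfun_compose)
  then show ?thesis by (simp add: cscale_def blinfun.add_right blinfun.scaleR_right)
qed

lemma clinear_compose_left:
  assumes "clinear_op JX JY C"
  shows "C o\<^sub>L cscale (LJ JX) c T = cscale (LJ JY) c (C o\<^sub>L T)"
  by (rule blinfun_eqI) (simp add: cscale_LJ_apply clinear_apply[OF assms])

lemma cscale_compose_right:
  "cscale (LJ J) c T o\<^sub>L C = cscale (LJ J) c (T o\<^sub>L C)"
  by (rule blinfun_eqI) (simp add: cscale_LJ_apply)

section \<open>Circle integrals\<close>

lemma cscale_cis: "cscale J (cis x) v = cos x *\<^sub>R v + sin x *\<^sub>R blinfun_apply J v"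
  by (simp add: cscale_def)

lemma cscale_of_real_mult: "cscale J (of_real h * c) v = h *\<^sub>R cscale J c v"
  by (simp add: cscale_def algebra_simps)

lemma wpow: "(of_real r * cis \<phi>) powi j = of_real (r powi j) * cis (of_int j * \<phi>)"
  by (simp add: power_int_mult_distrib cis_power_int)

lemma continuous_on_cscale[continuous_intros]:
  "continuous_on S c \<Longrightarrow> continuous_on S v \<Longrightarrow> continuous_on S (\<lambda>x. cscale J (c x) (v x))"
  unfolding cscale_def by (intro continuous_intros)

lemma orth_integral:
  fixes m :: int and v :: "'v::banach"
  shows "((\<lambda>\<phi>. cscale J (cis (of_int m * \<phi>)) v) has_integral (if m = 0 then (2*pi) *\<^sub>R v else 0)) {0..2*pi}"
proof (cases "m = 0")
  case True
  then show ?thesis using has_integral_const_real[of v 0 "2*pi"] by simp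
next
  case False
  define F where "F \<phi> = (sin (of_int m * \<phi>) / of_int m) *\<^sub>R v - (cos (of_int m * \<phi>) / of_int m) *\<^sub>R blinfun_apply J v" for \<phi>
  have "((\<lambda>\<phi>. cscale J (cis (of_int m * \<phi>)) v) has_integral (F (2*pi) - F 0)) {0..2*pi}"
  proof (rule fundamental_theorem_of_calculus)
    fix x assume "x \<in> {0..2*pi}"
    show "(F has_vector_derivative cscale J (cis (of_int m * x)) v) (at x within {0..2*pi})"
      unfolding F_def cscale_cis
      using False
      by (auto intro!: derivative_eq_intros simp: field_simps)
  qed simp
  moreover have "F (2*pi) - F 0 = 0"
  proof -
    have "sin (of_int m * (2*pi)) = 0" "cos (of_int m * (2*pi)) = 1"
      using sin_int_2pin[of m] cos_int_2pin[of m] by (simp_all add: mult.commute)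
    then show ?thesis by (simp add: F_def)
  qed
  ultimately show ?thesis using False by simp
qed

lemma circle_invariance:
  fixes P Q :: "complex \<Rightarrow> 'v::banach" and J :: "'v \<Rightarrow>\<^sub>L 'v"
  assumes cs: "J o\<^sub>L J = - id_blinfun"
    and der: "\<And>w. a < cmod w \<Longrightarrow> cmod w < b \<Longrightarrow> (P has_derivative (\<lambda>h. cscale J h (Q w))) (at w)"
    and cont: "continuous_on {w. a < cmod w \<and> cmod w < b} Q"
    and a: "0 \<le> a"
  shows "\<exists>C. \<forall>r\<in>{a<..<b}. integral {0..2*pi} (\<lambda>\<phi>. P (of_real r * cis \<phi>)) = C"
proof -
  define U where "U = {a<..<b}"
  define f where "f r \<phi> = P (of_real r * cis \<phi>)" for r \<phi>
  define fx where "fx r \<phi> = cscale J (cis \<phi>) (Q (of_real r * cis \<phi>))" for r \<phi>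
  have inann: "a < cmod (of_real r * cis \<phi>) \<and> cmod (of_real r * cis \<phi>) < b" if "r \<in> U" for r \<phi>
    using that a unfolding U_def by (auto simp: norm_mult)
  have contP: "continuous_on {w. a < cmod w \<and> cmod w < b} P"
    using der by (metis (mono_tags, lifting) continuous_at_imp_continuous_on has_derivative_continuous mem_Collect_eq)
  have dr: "((\<lambda>r. f r \<phi>) has_vector_derivative fx r \<phi>) (at r within U)" if "r \<in> U" for r \<phi>
  proof -
    have "((\<lambda>r. of_real r * cis \<phi>) has_derivative (\<lambda>h. of_real h * cis \<phi>)) (at r within U)"
      by (auto intro!: derivative_eq_intros)
    from has_derivative_compose[OF this der[OF inann[OF that, THEN conjunct1] inann[OF that, THEN conjunct2]]]
    show ?thesis unfolding has_vector_derivative_def f_def fx_def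
      by (simp add: cscale_of_real_mult)
  qed
  have intf: "f r integrable_on cbox 0 (2*pi)" if "r \<in> U" for r
    unfolding f_def cbox_interval
    by (rule integrable_continuous_interval, rule continuous_on_compose2[OF contP])
       (auto intro!: continuous_intros inann[OF that])
  have cfx: "continuous_on (U \<times> cbox 0 (2*pi)) (\<lambda>(r, \<phi>). fx r \<phi>)"
    unfolding fx_def split_beta
    by (intro continuous_intros continuous_on_compose2[OF cont]) (auto intro!: inann)
  have zero: "integral (cbox 0 (2*pi)) (fx r) = 0" if "r \<in> U" for r
  proof -
    have rpos: "r > 0" using that a unfolding U_def by auto
    have dphi: "((\<lambda>\<phi>. f r \<phi>) has_vector_derivative cscale J (\<i> * of_real r) (fx r \<phi>)) (at \<phi> within {0..2*pi})" for \<phi>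
    proof -
      have "((\<lambda>\<phi>. of_real r * cis \<phi>) has_derivative (\<lambda>h. of_real r * (h *\<^sub>R (\<i> * cis \<phi>)))) (at \<phi> within {0..2*pi})"
        by (auto intro!: derivative_eq_intros)
      from has_derivative_compose[OF this der[OF inann[OF that, THEN conjunct1] inann[OF that, THEN conjunct2]]]
      have "((\<lambda>\<phi>. f r \<phi>) has_derivative (\<lambda>h. cscale J (of_real r * (h *\<^sub>R (\<i> * cis \<phi>))) (Q (of_real r * cis \<phi>)))) (at \<phi> within {0..2*pi})"
        unfolding f_def .
      moreover have "cscale J (of_real r * (h *\<^sub>R (\<i> * cis \<phi>))) (Q (of_real r * cis \<phi>)) = h *\<^sub>R cscale J (\<i> * of_real r) (fx r \<phi>)" for h
      proof -
        have "of_real r * (h *\<^sub>R (\<i> * cis \<phi>)) = of_real h * (\<i> * of_real r * cis \<phi>)"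
          by (simp add: scaleR_conv_of_real algebra_simps)
        then show ?thesis unfolding fx_def cscale_mult[OF cs] by (simp only: cscale_of_real_mult)
      qed
      ultimately show ?thesis unfolding has_vector_derivative_def by simp
    qed
    have "((\<lambda>\<phi>. cscale J (\<i> * of_real r) (fx r \<phi>)) has_integral (f r (2*pi) - f r 0)) {0..2*pi}"
      by (rule fundamental_theorem_of_calculus) (use dphi in auto)
    then have "((\<lambda>\<phi>. cscale J (\<i> * of_real r) (fx r \<phi>)) has_integral 0) {0..2*pi}"
      by (simp add: f_def)
    from has_integral_linear[OF this bounded_linear_cscale[of J "- \<i> / of_real r"]]
    have "((\<lambda>\<phi>. fx r \<phi>) has_integral 0) {0..2*pi}"
      using rpos by (simp add: o_def cscale_mult[OF cs] field_simps)
    then show ?thesis by (simp add: cbox_interval integral_unique)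
  qed
  have "((\<lambda>r. integral (cbox 0 (2*pi)) (f r)) has_derivative (\<lambda>h. 0)) (at r within U)" if "r \<in> U" for r
  proof -
    have "((\<lambda>r. integral (cbox 0 (2*pi)) (f r)) has_vector_derivative integral (cbox 0 (2*pi)) (fx r)) (at r within U)"
      by (rule leibniz_rule_vector_derivative[OF dr intf cfx that]) (auto simp: U_def)
    then show ?thesis using zero[OF that] by (simp add: has_vector_derivative_def)
  qed
  from has_derivative_zero_constant[OF _ this] obtain C where "\<forall>r\<in>U. integral (cbox 0 (2*pi)) (f r) = C"
    by (auto simp: U_def)
  then show ?thesis unfolding U_def f_def cbox_interval by blast
qed

lemma has_sum_bounded_terms:
  fixes f :: "'a \<Rightarrow> 'v::real_normed_vector"
  assumes "(f has_sum s) A"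
  shows "\<exists>B. \<forall>x\<in>A. norm (f x) \<le> B"
proof -
  have "eventually (\<lambda>X. dist (sum f X) s < 1) (finite_subsets_at_top A)"
    using assms unfolding has_sum_def by (rule tendstoD) simp
  then have "\<exists>X. finite X \<and> X \<subseteq> A \<and> (\<forall>Y. finite Y \<and> X \<subseteq> Y \<and> Y \<subseteq> A \<longrightarrow> dist (sum f Y) s < 1)"
    by (simp only: eventually_finite_subsets_at_top)
  then obtain X0 where X0: "finite X0" "X0 \<subseteq> A"
    "\<And>Y. finite Y \<Longrightarrow> X0 \<subseteq> Y \<Longrightarrow> Y \<subseteq> A \<Longrightarrow> dist (sum f Y) s < 1"
    by metis
  have "norm (f x) \<le> 2 + (\<Sum>y\<in>X0. norm (f y))" if "x \<in> A" for x
  proof (cases "x \<in> X0")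
    case True
    then have "norm (f x) \<le> (\<Sum>y\<in>X0. norm (f y))"
      using X0(1) by (intro member_le_sum) auto
    moreover have "0 \<le> (\<Sum>y\<in>X0. norm (f y))" by (simp add: sum_nonneg)
    ultimately show ?thesis by linarith
  next
    case False
    have d1: "dist (sum f (insert x X0)) s < 1" using X0 that by (intro X0(3)) auto
    have d2: "dist (sum f X0) s < 1" using X0 by (intro X0(3)) auto
    have "f x = sum f (insert x X0) - sum f X0" using False X0(1) by simp
    then have "norm (f x) = norm ((sum f (insert x X0) - s) - (sum f X0 - s))" by simp
    also have "\<dots> \<le> norm (sum f (insert x X0) - s) + norm (sum f X0 - s)"
      by (rule norm_triangle_ineq4)
    finally have "norm (f x) \<le> dist (sum f (insert x X0)) s + dist (sum f X0) s"
      by (simp add: dist_norm)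
    moreover have "0 \<le> (\<Sum>y\<in>X0. norm (f y))" by (simp add: sum_nonneg)
    ultimately show ?thesis using d1 d2 by linarith
  qed
  then show ?thesis by blast
qed

lemma laurent_coeff:
  fixes T :: "int \<Rightarrow> 'v::banach" and F :: "complex \<Rightarrow> 'v" and J :: "'v \<Rightarrow>\<^sub>L 'v"
  assumes cs: "cstruct J" and r: "r > 0"
    and hs: "\<And>\<phi>. ((\<lambda>j. cscale J ((of_real r * cis \<phi>) powi j) (T j)) has_sum F (of_real r * cis \<phi>)) UNIV"
    and bnd: "(\<lambda>j. norm (T j) * r powi j) summable_on UNIV"
  shows "((\<lambda>\<phi>. cscale J ((of_real r * cis \<phi>) powi (-k)) (F (of_real r * cis \<phi>))) has_integral (2*pi) *\<^sub>R T k) {0..2*pi}"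
proof -
  define f where "f j \<phi> = cscale J ((of_real r * cis \<phi>) powi (-k)) (cscale J ((of_real r * cis \<phi>) powi j) (T j))" for j \<phi>
  have f_eq: "f j \<phi> = (r powi (-k) * r powi j) *\<^sub>R cscale J (cis (of_int (j - k) * \<phi>)) (T j)" for j \<phi>
  proof -
    have "f j \<phi> = cscale J (of_real (r powi (-k) * r powi j) * cis (of_int (j - k) * \<phi>)) (T j)"
    proof -
      have e: "cis (of_int (j - k) * \<phi>) = cis (of_int j * \<phi>) * cis (of_int (-k) * \<phi>)"
        by (simp add: cis_mult algebra_simps)
      show ?thesis unfolding f_def cscale_mult'[OF cs] wpow e
        by (simp add: algebra_simps)
    qed
    then show ?thesis by (simp only: cscale_of_real_mult)
  qed
  have nf: "norm (f j \<phi>) \<le> r powi (-k) * (norm (T j) * r powi j)" for j \<phi>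
    unfolding f_def norm_cscale[OF cs] norm_power_int using r by (simp add: norm_mult)
  have ul: "uniform_limit {0..2*pi} (\<lambda>X \<phi>. \<Sum>j\<in>X. f j \<phi>)
      (\<lambda>\<phi>. cscale J ((of_real r * cis \<phi>) powi (-k)) (F (of_real r * cis \<phi>))) (finite_subsets_at_top UNIV)"
  proof (rule Weierstrass_m_test_general'[OF nf])
    show "((\<lambda>j. f j \<phi>) has_sum cscale J ((of_real r * cis \<phi>) powi (-k)) (F (of_real r * cis \<phi>))) UNIV" for \<phi>
      unfolding f_def by (rule has_sum_bounded_linear[OF bounded_linear_cscale hs])
    show "(\<lambda>j. r powi (-k) * (norm (T j) * r powi j)) summable_on UNIV"
      by (rule summable_on_cmult_right[OF bnd])
  qed
  have cont: "continuous_on {0..2*pi} (\<lambda>\<phi>. \<Sum>j\<in>X. f j \<phi>)" for X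
    unfolding f_eq by (intro continuous_intros)
  obtain I Jl where I: "\<And>X. ((\<lambda>\<phi>. \<Sum>j\<in>X. f j \<phi>) has_integral I X) {0..2*pi}"
    and Jl: "((\<lambda>\<phi>. cscale J ((of_real r * cis \<phi>) powi (-k)) (F (of_real r * cis \<phi>))) has_integral Jl) {0..2*pi}"
    and lim: "(I \<longlongrightarrow> Jl) (finite_subsets_at_top UNIV)"
    using uniform_limit_integral[OF ul cont] by auto
  have Ij: "((\<lambda>\<phi>. f j \<phi>) has_integral (if j = k then (2*pi) *\<^sub>R T k else 0)) {0..2*pi}" for j
  proof -
    have "((\<lambda>\<phi>. (r powi (-k) * r powi j) *\<^sub>R cscale J (cis (of_int (j - k) * \<phi>)) (T j)) has_integral
       (r powi (-k) * r powi j) *\<^sub>R (if j - k = 0 then (2*pi) *\<^sub>R T j else 0)) {0..2*pi}"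
      by (rule has_integral_cmul, rule orth_integral)
    moreover have "(r powi (-k) * r powi j) *\<^sub>R (if j - k = 0 then (2*pi) *\<^sub>R T j else 0) = (if j = k then (2*pi) *\<^sub>R T k else 0)"
      using r by (auto simp: power_int_minus field_simps)
    ultimately show ?thesis unfolding f_eq by simp
  qed
  have "eventually (\<lambda>X. I X = (2*pi) *\<^sub>R T k) (finite_subsets_at_top UNIV)"
  proof -
    have "eventually (\<lambda>X. finite X \<and> k \<in> X) (finite_subsets_at_top (UNIV::int set))"
      unfolding eventually_finite_subsets_at_top by (rule exI[of _ "{k}"]) auto
    then show ?thesis
    proof (rule eventually_mono)
      fix X :: "int set" assume X: "finite X \<and> k \<in> X"
      have "((\<lambda>\<phi>. \<Sum>j\<in>X. f j \<phi>) has_integral (\<Sum>j\<in>X. (if j = k then (2*pi) *\<^sub>R T k else 0))) {0..2*pi}"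
        using X by (intro has_integral_sum Ij) auto
      moreover have "(\<Sum>j\<in>X. (if j = k then (2*pi) *\<^sub>R T k else 0)) = (2*pi) *\<^sub>R T k"
        using X by (simp add: sum.delta)
      ultimately show "I X = (2*pi) *\<^sub>R T k" using I[of X] by (metis has_integral_unique)
    qed
  qed
  then have "(I \<longlongrightarrow> (2*pi) *\<^sub>R T k) (finite_subsets_at_top UNIV)"
    by (rule tendsto_eventually)
  with lim have "Jl = (2*pi) *\<^sub>R T k"
    using tendsto_unique finite_subsets_at_top_neq_bot by blast
  with Jl show ?thesis by simp
qed

lemma comp_id_right[simp]: "f o\<^sub>L id_blinfun = f" by (rule blinfun_eqI) simp
lemma comp_id_left[simp]: "id_blinfun o\<^sub>L f = f" by (rule blinfun_eqI) simp

lemma comp_assoc: "(a o\<^sub>L b) o\<^sub>L c = a o\<^sub>L (b o\<^sub>L c)" by (rule blinfun_eqI) simp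
lemma comp_add_left: "(a + b) o\<^sub>L c = (a o\<^sub>L c) + (b o\<^sub>L c)" by (rule blinfun_eqI) (simp add: blinfun.add_left)
lemma comp_add_right: "c o\<^sub>L (a + b) = (c o\<^sub>L a) + (c o\<^sub>L b)" by (rule blinfun_eqI) (simp add: blinfun.add_left blinfun.add_right)
lemma comp_diff_left: "(a - b) o\<^sub>L c = (a o\<^sub>L c) - (b o\<^sub>L c)" by (rule blinfun_eqI) (simp add: blinfun.diff_left)
lemma comp_diff_right: "c o\<^sub>L (a - b) = (c o\<^sub>L a) - (c o\<^sub>L b)" by (rule blinfun_eqI) (simp add: blinfun.diff_left blinfun.diff_right)
lemma comp_minus_left[simp]: "(- a) o\<^sub>L c = - (a o\<^sub>L c)" by (rule blinfun_eqI) (simp add: blinfun.minus_left)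
lemma comp_minus_right[simp]: "c o\<^sub>L (- a) = - (c o\<^sub>L a)" by (rule blinfun_eqI) (simp add: blinfun.minus_left blinfun.minus_right)
lemma comp_scaleR_left[simp]: "(r *\<^sub>R a) o\<^sub>L c = r *\<^sub>R (a o\<^sub>L c)" by (rule blinfun_eqI) (simp add: blinfun.scaleR_left)
lemma comp_scaleR_right[simp]: "c o\<^sub>L (r *\<^sub>R a) = r *\<^sub>R (c o\<^sub>L a)" by (rule blinfun_eqI) (simp add: blinfun.scaleR_left blinfun.scaleR_right)
lemma comp_zero_left[simp]: "0 o\<^sub>L c = 0" by (rule blinfun_eqI) simp
lemma comp_zero_right[simp]: "c o\<^sub>L 0 = 0" by (rule blinfun_eqI) simp

lemma continuous_on_blinfun_compose'[continuous_intros]: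
  "continuous_on S f \<Longrightarrow> continuous_on S g \<Longrightarrow> continuous_on S (\<lambda>x. f x o\<^sub>L g x)"
  by (rule bounded_bilinear.continuous_on[OF bounded_bilinear_blinfun_compose])

lemma has_derivative_cscale:
  fixes V :: "complex \<Rightarrow> 'v::real_normed_vector" and J :: "'v \<Rightarrow>\<^sub>L 'v"
  assumes cs: "J o\<^sub>L J = - id_blinfun"
    and dc: "(c has_field_derivative c') (at w)"
    and dV: "(V has_derivative (\<lambda>h. cscale J h V')) (at w)"
  shows "((\<lambda>w. cscale J (c w) (V w)) has_derivative
           (\<lambda>h. cscale J h (cscale J c' (V w) + cscale J (c w) V'))) (at w)"
proof -
  have dc': "(c has_derivative (\<lambda>h. h * c')) (at w)"
    using dc by (simp add: has_field_derivative_def mult_commute_abs)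
  have "((\<lambda>w. Re (c w) *\<^sub>R V w + Im (c w) *\<^sub>R blinfun_apply J (V w)) has_derivative
     (\<lambda>h. Re (c w) *\<^sub>R cscale J h V' + Re (h * c') *\<^sub>R V w +
          (Im (c w) *\<^sub>R blinfun_apply J (cscale J h V') + Im (h * c') *\<^sub>R blinfun_apply J (V w)))) (at w)"
    using bounded_linear.has_derivative[OF blinfun.bounded_linear_right dV, of J]
    by (intro derivative_intros dc' dV)
  moreover have "(\<lambda>h. Re (c w) *\<^sub>R cscale J h V' + Re (h * c') *\<^sub>R V w +
          (Im (c w) *\<^sub>R blinfun_apply J (cscale J h V') + Im (h * c') *\<^sub>R blinfun_apply J (V w)))
      = (\<lambda>h. cscale J h (cscale J c' (V w) + cscale J (c w) V'))"
  proof
    fix h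
    show "Re (c w) *\<^sub>R cscale J h V' + Re (h * c') *\<^sub>R V w +
          (Im (c w) *\<^sub>R blinfun_apply J (cscale J h V') + Im (h * c') *\<^sub>R blinfun_apply J (V w))
      = cscale J h (cscale J c' (V w) + cscale J (c w) V')"
      unfolding cscale_add_right cscale_mult[OF cs]
      using JJ_apply[OF cs, of V']
      by (simp add: cscale_def blinfun.add_right blinfun.scaleR_right algebra_simps)
  qed
  ultimately show ?thesis by (simp add: cscale_def)
qed

lemma geom_int_summable:
  fixes q :: real
  assumes "0 \<le> q" "q < 1"
  shows "(\<lambda>j::int. q ^ nat \<bar>j\<bar>) summable_on UNIV"
proof -
  have U: "(UNIV::int set) = range int \<union> range (\<lambda>n. - int n - 1)"
  proof -
    have "j \<in> range int \<union> range (\<lambda>n. - int n - 1)" for j :: int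
    proof (cases "j \<ge> 0")
      case True
      then show ?thesis by (intro UnI1 image_eqI[of _ _ "nat j"]) auto
    next
      case False
      then show ?thesis by (intro UnI2 image_eqI[of _ _ "nat (- j - 1)"]) auto
    qed
    then show ?thesis by auto
  qed
  have 1: "(\<lambda>j::int. q ^ nat \<bar>j\<bar>) summable_on range int"
    by (subst summable_on_reindex) (use assms in \<open>auto simp: o_def summable_on_UNIV_nonneg_real_iff intro: summable_geometric\<close>)
  have 2: "(\<lambda>j::int. q ^ nat \<bar>j\<bar>) summable_on range (\<lambda>n. - int n - 1)"
  proof (subst summable_on_reindex)
    show "inj_on (\<lambda>n. - int n - 1) UNIV" by (auto simp: inj_on_def)
    have "(\<lambda>n. q ^ nat \<bar>- int n - 1\<bar>) = (\<lambda>n. q * q ^ n)"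
      by (auto simp: nat_add_distrib)
    then show "((\<lambda>j::int. q ^ nat \<bar>j\<bar>) \<circ> (\<lambda>n. - int n - 1)) summable_on UNIV"
      using assms by (auto simp: o_def summable_on_UNIV_nonneg_real_iff intro: summable_mult summable_geometric)
  qed
  show ?thesis unfolding U by (rule summable_on_Un_disjoint[OF 1 2]) auto
qed

locale setting =
  fixes JX :: "'x::banach \<Rightarrow>\<^sub>L 'x" and JY :: "'y::banach \<Rightarrow>\<^sub>L 'y"
    and A0 A1 :: "'x \<Rightarrow>\<^sub>L 'y" and R :: "complex \<Rightarrow> ('y \<Rightarrow>\<^sub>L 'x)" and T :: "int \<Rightarrow> ('y \<Rightarrow>\<^sub>L 'x)"
    and \<epsilon> \<theta> :: real
  assumes JX: "cstruct JX" and JY: "cstruct JY"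
    and A0: "clinear_op JX JY A0" and A1: "clinear_op JX JY A1"
    and eps: "\<epsilon> > 0" and theta: "\<theta> > 0"
    and inv: "\<forall>z \<in> V_set \<epsilon> \<union> W_set \<theta>. R z o\<^sub>L (A0 + cscale_op JY z A1) = id_blinfun \<and> (A0 + cscale_op JY z A1) o\<^sub>L R z = id_blinfun"
    and analytic: "op_analytic_on JX R (V_set \<epsilon> \<union> W_set \<theta>)"
    and laurent: "\<forall>z. 0 < cmod (z - 1) \<and> cmod (z - 1) < \<epsilon> \<longrightarrow>
                    ((\<lambda>j. cscale_op JX ((z - 1) powi j) (T j)) has_sum R z) UNIV"
begin

abbreviation "SS \<equiv> V_set \<epsilon> \<union> W_set \<theta>"
definition "Az z = A0 + cscale_op JY z A1"

lemma LX: "cstruct (LJ JX :: ('y \<Rightarrow>\<^sub>L 'x) \<Rightarrow>\<^sub>L _)" by (rule cstruct_LJ[OF JX])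
lemma LY: "cstruct (LJ JY :: ('y \<Rightarrow>\<^sub>L 'y) \<Rightarrow>\<^sub>L _)" by (rule cstruct_LJ[OF JY])

lemma open_SS: "open SS" using analytic by (simp add: op_analytic_on_def)

lemma W_in: "0 < cmod w \<Longrightarrow> cmod w < 1 + \<theta> \<Longrightarrow> 1 + w \<in> SS"
  by (auto simp: W_set_def)

lemma Az_apply: "blinfun_apply (Az z) x = blinfun_apply A0 x + cscale JY z (blinfun_apply A1 x)"
  by (simp add: Az_def cscale_op_eq cscale_LJ_apply blinfun.add_left)

lemma RA: "z \<in> SS \<Longrightarrow> R z o\<^sub>L Az z = id_blinfun" using inv by (simp add: Az_def)
lemma AR: "z \<in> SS \<Longrightarrow> Az z o\<^sub>L R z = id_blinfun" using inv by (simp add: Az_def)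

lemma RA_apply: "z \<in> SS \<Longrightarrow> blinfun_apply (R z) (blinfun_apply (Az z) x) = x"
  using RA by (metis blinfun_apply_blinfun_compose id_blinfun.rep_eq)
lemma AR_apply: "z \<in> SS \<Longrightarrow> blinfun_apply (Az z) (blinfun_apply (R z) y) = y"
  using AR by (metis blinfun_apply_blinfun_compose id_blinfun.rep_eq)

lemma deriv_R:
  assumes z: "z \<in> SS"
  shows "(R has_derivative (\<lambda>h. cscale (LJ JX) h (- (R z o\<^sub>L A1 o\<^sub>L R z)))) (at z)"
proof -
  obtain D where D: "(R has_derivative (\<lambda>h. cscale_op JX h D)) (at z)"
    using analytic z by (auto simp: op_analytic_on_def)
  have dA: "(Az has_derivative (\<lambda>h. cscale_op JY h A1)) (at z)"
    unfolding Az_def[abs_def] cscale_op_def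
    by (auto intro!: derivative_eq_intros)
  have dF: "((\<lambda>z. R z o\<^sub>L Az z) has_derivative (\<lambda>h. (R z o\<^sub>L cscale_op JY h A1) + (cscale_op JX h D o\<^sub>L Az z))) (at z)"
    by (rule bounded_bilinear.FDERIV[OF bounded_bilinear_blinfun_compose D dA])
  have dF0: "((\<lambda>z. R z o\<^sub>L Az z) has_derivative (\<lambda>h. 0)) (at z)"
    by (rule has_derivative_transform_within_open[OF has_derivative_const open_SS z]) (simp add: RA)
  have "(\<lambda>h. (R z o\<^sub>L cscale_op JY h A1) + (cscale_op JX h D o\<^sub>L Az z)) = (\<lambda>h. 0)"
    using has_derivative_unique[OF dF dF0] .
  from fun_cong[OF this, of 1] have e: "(R z o\<^sub>L A1) + (D o\<^sub>L Az z) = 0"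
    by (simp add: cscale_op_eq)
  have "D = D o\<^sub>L (Az z o\<^sub>L R z)" using AR[OF z] by simp
  also have "\<dots> = (D o\<^sub>L Az z) o\<^sub>L R z" by (simp add: comp_assoc)
  also have "D o\<^sub>L Az z = - (R z o\<^sub>L A1)" using e by (simp add: eq_neg_iff_add_eq_0 add.commute)
  finally have "D = - (R z o\<^sub>L A1 o\<^sub>L R z)" by (simp add: comp_assoc)
  with D show ?thesis by (simp add: cscale_op_eq)
qed

lemma R_cont: "continuous_on SS R"
  using deriv_R by (meson continuous_at_imp_continuous_on has_derivative_continuous)

lemma Az_clinear: "blinfun_apply (Az z) (blinfun_apply JX x) = blinfun_apply JY (blinfun_apply (Az z) x)"
proof -
  have "blinfun_apply A0 (blinfun_apply JX x) = blinfun_apply JY (blinfun_apply A0 x)"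
    using A0 unfolding clinear_op_def by (metis blinfun_apply_blinfun_compose)
  moreover have "blinfun_apply A1 (blinfun_apply JX x) = blinfun_apply JY (blinfun_apply A1 x)"
    using A1 unfolding clinear_op_def by (metis blinfun_apply_blinfun_compose)
  ultimately show ?thesis by (simp add: Az_apply cscale_J_comm blinfun.add_right)
qed

lemma R_clinear_apply:
  assumes z: "z \<in> SS"
  shows "blinfun_apply (R z) (cscale JY c y) = cscale JX c (blinfun_apply (R z) y)"
proof -
  have "blinfun_apply (R z) (blinfun_apply JY y) = blinfun_apply JX (blinfun_apply (R z) y)"
    by (metis AR_apply[OF z] Az_clinear RA_apply[OF z])
  then show ?thesis by (simp add: cscale_def blinfun.add_right blinfun.scaleR_right)
qed

definition "Pk k w = cscale (LJ JX) (w powi (-k)) (R (1 + w))"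
definition "Qk k w = cscale (LJ JX) (of_int (-k) * w powi (-k - 1)) (R (1 + w)) +
    cscale (LJ JX) (w powi (-k)) (- (R (1 + w) o\<^sub>L A1 o\<^sub>L R (1 + w)))"

lemma Pk_deriv:
  assumes "0 < cmod w" "cmod w < 1 + \<theta>"
  shows "(Pk k has_derivative (\<lambda>h. cscale (LJ JX) h (Qk k w))) (at w)"
proof -
  have w0: "w \<noteq> 0" using assms by auto
  have dR: "((\<lambda>w. R (1 + w)) has_derivative (\<lambda>h. cscale (LJ JX) h (- (R (1 + w) o\<^sub>L A1 o\<^sub>L R (1 + w))))) (at w)"
  proof -
    have d1: "((\<lambda>w. 1 + w) has_derivative (\<lambda>h. h)) (at w)"
      by (rule has_derivative_eq_rhs, rule has_derivative_add[OF has_derivative_const has_derivative_ident]) simp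
    show ?thesis using has_derivative_compose[OF d1 deriv_R[OF W_in[OF assms]]] by simp
  qed
  have dc: "((\<lambda>w. w powi (-k)) has_field_derivative (of_int (-k) * w powi (-k - 1))) (at w)"
    using DERIV_power_int[OF DERIV_ident, of "-k" w UNIV] w0 by simp
  show ?thesis
    unfolding Pk_def[abs_def] Qk_def
    by (rule has_derivative_cscale[OF cstruct_JJ[OF LX] dc dR])
qed

lemma Qk_cont: "continuous_on {w. 0 < cmod w \<and> cmod w < 1 + \<theta>} (Qk k)"
proof -
  have cR: "continuous_on {w. 0 < cmod w \<and> cmod w < 1 + \<theta>} (\<lambda>w. R (1 + w))"
    by (rule continuous_on_compose2[OF R_cont]) (auto intro!: continuous_intros simp: W_set_def)
  show ?thesis unfolding Qk_def[abs_def]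
    by (intro continuous_intros cR) auto
qed

lemma Pk_cont: "continuous_on {w. 0 < cmod w \<and> cmod w < 1 + \<theta>} (Pk k)"
  by (rule continuous_at_imp_continuous_on) (auto intro: has_derivative_continuous[OF Pk_deriv])

lemma T_bound_pt:
  assumes "0 < \<rho>" "\<rho> < \<epsilon>"
  shows "\<exists>B. \<forall>j. norm (T j) * \<rho> powi j \<le> B"
proof -
  have "((\<lambda>j. cscale_op JX ((1 + of_real \<rho> - 1) powi j) (T j)) has_sum R (1 + of_real \<rho>)) UNIV"
    using laurent[rule_format, of "1 + of_real \<rho>"] assms by simp
  from has_sum_bounded_terms[OF this] obtain B where
    B: "\<And>j. norm (cscale_op JX ((1 + of_real \<rho> - 1) powi j) (T j)) \<le> B" by blast
  have "norm (cscale_op JX ((1 + of_real \<rho> - 1) powi j) (T j)) = norm (T j) * \<rho> powi j" for j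
    unfolding cscale_op_eq norm_cscale[OF LX] using assms by (simp add: norm_power_int)
  then show ?thesis using B by metis
qed

lemma T_summable:
  assumes "0 < r" "2 * r < \<epsilon>"
  shows "(\<lambda>j. norm (T j) * r powi j) summable_on UNIV"
proof -
  have "0 < r/2" "r/2 < \<epsilon>" "0 < 3*r/2" "3*r/2 < \<epsilon>" using assms by auto
  then obtain B1 B2 where B1: "\<And>j. norm (T j) * (r/2) powi j \<le> B1"
    and B2: "\<And>j. norm (T j) * (3*r/2) powi j \<le> B2" using T_bound_pt by metis
  have b1: "0 \<le> B1" using B1[of 0] norm_ge_zero[of "T 0"] by (simp del: norm_ge_zero)
  have b2: "0 \<le> B2" using B2[of 0] norm_ge_zero[of "T 0"] by (simp del: norm_ge_zero)
  have bnd: "norm (T j) * r powi j \<le> (B1 + B2) * (2/3) ^ nat \<bar>j\<bar>" for j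
  proof (cases "j \<ge> 0")
    case True
    define n where "n = nat j"
    have n: "j = int n" using True by (simp add: n_def)
    have "r ^ n = (3*r/2) ^ n * (2/3) ^ n" by (simp add: power_mult_distrib[symmetric])
    then have "norm (T j) * r powi j = norm (T j) * (3*r/2) powi j * (2/3) ^ n"
      by (simp add: n power_int_of_nat)
    also have "\<dots> \<le> B2 * (2/3) ^ n" by (rule mult_right_mono[OF B2]) simp
    also have "\<dots> \<le> (B1 + B2) * (2/3) ^ n" using b1 by (intro mult_right_mono) auto
    finally show ?thesis using n by simp
  next
    case False
    define n where "n = nat (- j)"
    have n: "j = - int n" using False by (simp add: n_def)
    have "inverse (r ^ n) = inverse ((r/2) ^ n) * (1/2) ^ n"
      using assms by (simp add: power_divide power_one_over inverse_eq_divide)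
    then have "norm (T j) * r powi j = norm (T j) * (r/2) powi j * (1/2) ^ n"
      by (simp add: n power_int_minus power_int_of_nat)
    also have "\<dots> \<le> B1 * (1/2) ^ n" by (rule mult_right_mono[OF B1]) simp
    also have "\<dots> \<le> (B1 + B2) * (2/3) ^ n"
    proof -
      have "(1/2::real) ^ n \<le> (2/3) ^ n" by (rule power_mono) auto
      then show ?thesis using b1 b2 by (intro mult_mono) auto
    qed
    finally show ?thesis using n by simp
  qed
  have summ: "(\<lambda>j::int. (B1 + B2) * (2/3) ^ nat \<bar>j\<bar>) summable_on UNIV"
    by (rule summable_on_cmult_right[OF geom_int_summable]) auto
  show ?thesis
    by (rule summable_on_comparison_test[OF summ bnd]) (use assms in simp)
qed

end

lemma integral_w_const:
  fixes v :: "'v::banach"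
  assumes "0 < r"
  shows "((\<lambda>\<phi>. cscale J ((of_real r * cis \<phi>) powi (-k)) v) has_integral (if k = 0 then (2*pi) *\<^sub>R v else 0)) {0..2*pi}"
proof -
  have "((\<lambda>\<phi>. (r powi (-k)) *\<^sub>R cscale J (cis (of_int (-k) * \<phi>)) v) has_integral
      (r powi (-k)) *\<^sub>R (if -k = 0 then (2*pi) *\<^sub>R v else 0)) {0..2*pi}"
    by (rule has_integral_cmul, rule orth_integral)
  moreover have "cscale J ((of_real r * cis \<phi>) powi (-k)) v = (r powi (-k)) *\<^sub>R cscale J (cis (of_int (-k) * \<phi>)) v" for \<phi>
    unfolding wpow by (simp only: cscale_of_real_mult)
  ultimately show ?thesis by auto
qed

lemma clinear_add: "clinear_op JX JY A \<Longrightarrow> clinear_op JX JY B \<Longrightarrow> clinear_op JX JY (A + B)"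
  by (simp add: clinear_op_def comp_add_left comp_add_right)

context setting begin

definition "r0 = min \<epsilon> 1 / 4"

lemma r0: "0 < r0" "2 * r0 < \<epsilon>" "r0 < 1" "r0 < 1 + \<theta>"
  using eps theta by (auto simp: r0_def)

lemma Tk_integral:
  assumes r: "0 < r" "r < 1 + \<theta>"
  shows "((\<lambda>\<phi>. Pk k (of_real r * cis \<phi>)) has_integral (2*pi) *\<^sub>R T k) {0..2*pi}"
proof -
  obtain C where C: "\<forall>r\<in>{0<..<1+\<theta>}. integral {0..2*pi} (\<lambda>\<phi>. Pk k (of_real r * cis \<phi>)) = C"
    using circle_invariance[OF cstruct_JJ[OF LX] Pk_deriv[where k=k] Qk_cont[where k=k]] by auto
  have hs: "((\<lambda>j. cscale (LJ JX) ((of_real r0 * cis \<phi>) powi j) (T j)) has_sum R (1 + of_real r0 * cis \<phi>)) UNIV" for \<phi>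
  proof -
    have "0 < cmod (1 + of_real r0 * cis \<phi> - 1) \<and> cmod (1 + of_real r0 * cis \<phi> - 1) < \<epsilon>"
      using r0 by (simp add: norm_mult)
    from laurent[rule_format, OF this] show ?thesis by (simp add: cscale_op_eq)
  qed
  have "((\<lambda>\<phi>. Pk k (of_real r0 * cis \<phi>)) has_integral (2*pi) *\<^sub>R T k) {0..2*pi}"
    unfolding Pk_def
    by (rule laurent_coeff[OF LX r0(1) hs T_summable[OF r0(1) r0(2)]])
  then have "C = (2*pi) *\<^sub>R T k" using C r0 by (auto dest: integral_unique)
  moreover have "(\<lambda>\<phi>. Pk k (of_real r * cis \<phi>)) integrable_on {0..2*pi}"
    by (rule integrable_continuous_interval, rule continuous_on_compose2[OF Pk_cont])
       (use r in \<open>auto intro!: continuous_intros simp: norm_mult\<close>)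
  ultimately show ?thesis using C r by (metis greaterThanLessThan_iff integrable_integral)
qed

lemma T_norm_bound:
  assumes r: "0 < r" "r < 1 + \<theta>"
  shows "\<exists>M. \<forall>k. norm (T k) \<le> M * r powi (-k)"
proof -
  have "compact ((\<lambda>\<phi>. R (1 + of_real r * cis \<phi>)) ` {0..2*pi})"
    by (rule compact_continuous_image, rule continuous_on_compose2[OF R_cont])
       (use r in \<open>auto intro!: continuous_intros simp: norm_mult W_set_def\<close>)
  then obtain M where M: "M > 0" "\<And>\<phi>. \<phi> \<in> {0..2*pi} \<Longrightarrow> norm (R (1 + of_real r * cis \<phi>)) \<le> M"
    by (auto dest!: compact_imp_bounded simp: bounded_pos)
  have "norm (T k) \<le> M * r powi (-k)" for k
  proof -
    have int: "((\<lambda>\<phi>. Pk k (of_real r * cis \<phi>)) has_integral (2*pi) *\<^sub>R T k) (cbox 0 (2*pi))"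
      using Tk_integral[OF r] by (simp add: cbox_interval)
    have bd: "norm (Pk k (of_real r * cis \<phi>)) \<le> r powi (-k) * M" if "\<phi> \<in> cbox 0 (2*pi)" for \<phi>
    proof -
      have "norm (R (1 + of_real r * cis \<phi>)) \<le> M" using M that by (simp add: cbox_interval)
      then show ?thesis
        unfolding Pk_def norm_cscale[OF LX] norm_power_int using r
        by (simp add: norm_mult mult_left_mono)
    qed
    have "norm ((2*pi) *\<^sub>R T k) \<le> (r powi (-k) * M) * (2*pi)"
      using has_integral_bound[OF _ int bd] r M by simp
    then show ?thesis using pi_gt_zero by (simp add: field_simps)
  qed
  then show ?thesis by blast
qed

lemma pow_shift: "w \<noteq> 0 \<Longrightarrow> (w::complex) powi (- (k - 1)) = w powi (-k) * w"
proof -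
  assume w: "w \<noteq> 0"
  have "w powi (-k + 1) = w powi (-k) * w powi 1" by (rule power_int_add) (simp add: w)
  then show ?thesis by simp
qed

lemma rec_L: "(T k o\<^sub>L (A0 + A1)) + (T (k - 1) o\<^sub>L A1) = (if k = 0 then id_blinfun else 0)"
proof -
  define w where "w \<phi> = of_real r0 * cis \<phi>" for \<phi>
  have w0: "w \<phi> \<noteq> 0" "0 < cmod (w \<phi>)" "cmod (w \<phi>) < 1 + \<theta>" for \<phi>
    using r0 by (auto simp: w_def norm_mult)
  have i1: "((\<lambda>\<phi>. Pk k (w \<phi>) o\<^sub>L (A0 + A1)) has_integral ((2*pi) *\<^sub>R T k) o\<^sub>L (A0 + A1)) {0..2*pi}"
    using has_integral_linear[OF Tk_integral[OF r0(1) r0(4)] bounded_bilinear.bounded_linear_left[OF bounded_bilinear_blinfun_compose, of "A0 + A1"]]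
    by (simp add: o_def w_def)
  have i2: "((\<lambda>\<phi>. Pk (k - 1) (w \<phi>) o\<^sub>L A1) has_integral ((2*pi) *\<^sub>R T (k - 1)) o\<^sub>L A1) {0..2*pi}"
    using has_integral_linear[OF Tk_integral[OF r0(1) r0(4)] bounded_bilinear.bounded_linear_left[OF bounded_bilinear_blinfun_compose, of "A1"]]
    by (simp add: o_def w_def)
  have pt: "(Pk k (w \<phi>) o\<^sub>L (A0 + A1)) + (Pk (k - 1) (w \<phi>) o\<^sub>L A1) = cscale (LJ JX) ((w \<phi>) powi (-k)) id_blinfun" for \<phi>
  proof -
    have z: "1 + w \<phi> \<in> SS" by (rule W_in[OF w0(2,3)])
    have e1: "cscale (LJ JX) (w \<phi>) (R (1 + w \<phi>) o\<^sub>L A1) = R (1 + w \<phi>) o\<^sub>L cscale_op JY (w \<phi>) A1"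
      by (rule blinfun_eqI) (simp add: cscale_LJ_apply cscale_op_eq R_clinear_apply[OF z])
    have e2: "Az (1 + w \<phi>) = (A0 + A1) + cscale_op JY (w \<phi>) A1"
      unfolding Az_def cscale_op_eq cscale_add_left by simp
    have "(Pk k (w \<phi>) o\<^sub>L (A0 + A1)) + (Pk (k - 1) (w \<phi>) o\<^sub>L A1)
        = cscale (LJ JX) ((w \<phi>) powi (-k)) ((R (1 + w \<phi>) o\<^sub>L (A0 + A1)) + cscale (LJ JX) (w \<phi>) (R (1 + w \<phi>) o\<^sub>L A1))"
      unfolding Pk_def cscale_compose_right pow_shift[OF w0(1)] cscale_mult'[OF LX, symmetric] cscale_add_right ..
    also have "\<dots> = cscale (LJ JX) ((w \<phi>) powi (-k)) (R (1 + w \<phi>) o\<^sub>L Az (1 + w \<phi>))"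
      unfolding e1 e2 comp_add_right ..
    also have "\<dots> = cscale (LJ JX) ((w \<phi>) powi (-k)) id_blinfun" using RA[OF z] by simp
    finally show ?thesis .
  qed
  have "((\<lambda>\<phi>. (Pk k (w \<phi>) o\<^sub>L (A0 + A1)) + (Pk (k - 1) (w \<phi>) o\<^sub>L A1)) has_integral
      (((2*pi) *\<^sub>R T k) o\<^sub>L (A0 + A1)) + (((2*pi) *\<^sub>R T (k - 1)) o\<^sub>L A1)) {0..2*pi}"
    by (rule has_integral_add[OF i1 i2])
  moreover have "((\<lambda>\<phi>. (Pk k (w \<phi>) o\<^sub>L (A0 + A1)) + (Pk (k - 1) (w \<phi>) o\<^sub>L A1)) has_integral
      (if k = 0 then (2*pi) *\<^sub>R id_blinfun else 0)) {0..2*pi}"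
    unfolding pt unfolding w_def by (rule integral_w_const[OF r0(1)])
  ultimately have "(2*pi) *\<^sub>R ((T k o\<^sub>L (A0 + A1)) + (T (k - 1) o\<^sub>L A1)) = (2*pi) *\<^sub>R (if k = 0 then id_blinfun else 0)"
    by (auto dest: has_integral_unique simp: scaleR_add_right)
  then show ?thesis by (subst (asm) scaleR_cancel_left) (use pi_gt_zero in simp)
qed

lemma rec_R: "((A0 + A1) o\<^sub>L T k) + (A1 o\<^sub>L T (k - 1)) = (if k = 0 then id_blinfun else 0)"
proof -
  define w where "w \<phi> = of_real r0 * cis \<phi>" for \<phi>
  have w0: "w \<phi> \<noteq> 0" "0 < cmod (w \<phi>)" "cmod (w \<phi>) < 1 + \<theta>" for \<phi>
    using r0 by (auto simp: w_def norm_mult)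
  have C0: "clinear_op JX JY (A0 + A1)" by (rule clinear_add[OF A0 A1])
  have i1: "((\<lambda>\<phi>. (A0 + A1) o\<^sub>L Pk k (w \<phi>)) has_integral (A0 + A1) o\<^sub>L ((2*pi) *\<^sub>R T k)) {0..2*pi}"
    using has_integral_linear[OF Tk_integral[OF r0(1) r0(4)] bounded_bilinear.bounded_linear_right[OF bounded_bilinear_blinfun_compose, of "A0 + A1"]]
    by (simp add: o_def w_def)
  have i2: "((\<lambda>\<phi>. A1 o\<^sub>L Pk (k - 1) (w \<phi>)) has_integral A1 o\<^sub>L ((2*pi) *\<^sub>R T (k - 1))) {0..2*pi}"
    using has_integral_linear[OF Tk_integral[OF r0(1) r0(4)] bounded_bilinear.bounded_linear_right[OF bounded_bilinear_blinfun_compose, of "A1"]]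
    by (simp add: o_def w_def)
  have pt: "((A0 + A1) o\<^sub>L Pk k (w \<phi>)) + (A1 o\<^sub>L Pk (k - 1) (w \<phi>)) = cscale (LJ JY) ((w \<phi>) powi (-k)) id_blinfun" for \<phi>
  proof -
    have z: "1 + w \<phi> \<in> SS" by (rule W_in[OF w0(2,3)])
    have e1: "cscale (LJ JY) (w \<phi>) (A1 o\<^sub>L R (1 + w \<phi>)) = cscale_op JY (w \<phi>) A1 o\<^sub>L R (1 + w \<phi>)"
      by (rule blinfun_eqI) (simp add: cscale_LJ_apply cscale_op_eq)
    have e2: "Az (1 + w \<phi>) = (A0 + A1) + cscale_op JY (w \<phi>) A1"
      unfolding Az_def cscale_op_eq cscale_add_left by simp
    have "((A0 + A1) o\<^sub>L Pk k (w \<phi>)) + (A1 o\<^sub>L Pk (k - 1) (w \<phi>))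
        = cscale (LJ JY) ((w \<phi>) powi (-k)) (((A0 + A1) o\<^sub>L R (1 + w \<phi>)) + cscale (LJ JY) (w \<phi>) (A1 o\<^sub>L R (1 + w \<phi>)))"
      unfolding Pk_def clinear_compose_left[OF C0] clinear_compose_left[OF A1] pow_shift[OF w0(1)]
        cscale_mult'[OF LY, symmetric] cscale_add_right ..
    also have "\<dots> = cscale (LJ JY) ((w \<phi>) powi (-k)) (Az (1 + w \<phi>) o\<^sub>L R (1 + w \<phi>))"
      unfolding e1 e2 comp_add_left ..
    also have "\<dots> = cscale (LJ JY) ((w \<phi>) powi (-k)) id_blinfun" using AR[OF z] by simp
    finally show ?thesis .
  qed
  have "((\<lambda>\<phi>. ((A0 + A1) o\<^sub>L Pk k (w \<phi>)) + (A1 o\<^sub>L Pk (k - 1) (w \<phi>))) has_integral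
      ((A0 + A1) o\<^sub>L ((2*pi) *\<^sub>R T k)) + (A1 o\<^sub>L ((2*pi) *\<^sub>R T (k - 1)))) {0..2*pi}"
    by (rule has_integral_add[OF i1 i2])
  moreover have "((\<lambda>\<phi>. ((A0 + A1) o\<^sub>L Pk k (w \<phi>)) + (A1 o\<^sub>L Pk (k - 1) (w \<phi>))) has_integral
      (if k = 0 then (2*pi) *\<^sub>R id_blinfun else 0)) {0..2*pi}"
    unfolding pt unfolding w_def by (rule integral_w_const[OF r0(1)])
  ultimately have "(2*pi) *\<^sub>R (((A0 + A1) o\<^sub>L T k) + (A1 o\<^sub>L T (k - 1))) = (2*pi) *\<^sub>R (if k = 0 then id_blinfun else 0)"
    by (auto dest: has_integral_unique simp: scaleR_add_right)
  then show ?thesis by (subst (asm) scaleR_cancel_left) (use pi_gt_zero in simp)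
qed

end

lemma op_pow_add: "op_pow A (m + n) = op_pow A m o\<^sub>L op_pow A n"
  by (induction m) (simp_all add: comp_assoc)

lemma op_pow_one: "op_pow A 1 = A" by simp

lemma op_pow_comm: "op_pow A n o\<^sub>L A = A o\<^sub>L op_pow A n"
  using op_pow_add[of A n 1] by simp

lemma op_pow_Suc': "op_pow A (Suc n) = op_pow A n o\<^sub>L A"
  by (simp add: op_pow_comm)

lemma op_inv_eq:
  assumes "B o\<^sub>L A = id_blinfun" "A o\<^sub>L B = id_blinfun"
  shows "op_inv A = B"
  unfolding op_inv_def
proof (rule the_equality)
  show "B o\<^sub>L A = id_blinfun \<and> A o\<^sub>L B = id_blinfun" using assms by simp
  fix B' assume B': "B' o\<^sub>L A = id_blinfun \<and> A o\<^sub>L B' = id_blinfun"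
  have "B' = B' o\<^sub>L (A o\<^sub>L B)" using assms by simp
  also have "\<dots> = (B' o\<^sub>L A) o\<^sub>L B" by (simp add: comp_assoc)
  also have "\<dots> = B" using B' by simp
  finally show "B' = B" .
qed

lemma summable_choose_geom:
  fixes q :: real
  assumes q: "0 \<le> q" "q < 1"
  shows "summable (\<lambda>m. real ((m + s) choose s) * q ^ m)"
proof (induction s)
  case 0
  then show ?case using q by (simp add: summable_geometric)
next
  case (Suc s)
  have "summable (\<lambda>k. \<Sum>i\<le>k. (real ((i + s) choose s) * q ^ i) * q ^ (k - i))"
    using Suc q by (intro summable_Cauchy_product) (auto simp: summable_geometric)
  moreover have "(\<Sum>i\<le>k. (real ((i + s) choose s) * q ^ i) * q ^ (k - i)) = real ((k + Suc s) choose Suc s) * q ^ k" for k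
  proof -
    have "(\<Sum>i\<le>k. (real ((i + s) choose s) * q ^ i) * q ^ (k - i)) = (\<Sum>i\<le>k. real ((s + i) choose s)) * q ^ k"
      unfolding sum_distrib_right
      by (intro sum.cong refl) (simp add: mult.assoc power_add[symmetric] add.commute)
    also have "(\<Sum>i\<le>k. real ((s + i) choose s)) = real ((s + k + 1) choose (s + 1))"
      by (subst of_nat_sum[symmetric], subst choose_rising_sum(1)) simp
    finally show ?thesis by (simp add: add.commute add.left_commute)
  qed
  ultimately show ?case by simp
qed

lemma tele:
  fixes A :: "'a::banach \<Rightarrow>\<^sub>L 'a"
  assumes sc: "summable (\<lambda>m. c m *\<^sub>R op_pow A m)" and sd: "summable (\<lambda>m. d m *\<^sub>R op_pow A m)"
    and c0: "c 0 = d 0" and cd: "\<And>m. c (Suc m) - c m = d (Suc m)"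
  shows "(id_blinfun - A) o\<^sub>L (\<Sum>m. c m *\<^sub>R op_pow A m) = (\<Sum>m. d m *\<^sub>R op_pow A m)"
    and "(\<Sum>m. c m *\<^sub>R op_pow A m) o\<^sub>L (id_blinfun - A) = (\<Sum>m. d m *\<^sub>R op_pow A m)"
proof -
  have blL: "bounded_linear (\<lambda>X. A o\<^sub>L X)"
    by (rule bounded_bilinear.bounded_linear_right[OF bounded_bilinear_blinfun_compose])
  have blR: "bounded_linear (\<lambda>X. X o\<^sub>L A)"
    by (rule bounded_bilinear.bounded_linear_left[OF bounded_bilinear_blinfun_compose])
  have sc': "summable (\<lambda>m. c m *\<^sub>R op_pow A (Suc m))"
    using bounded_linear.summable[OF blL sc] by simp
  have sc1: "summable (\<lambda>m. c (Suc m) *\<^sub>R op_pow A (Suc m))"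
    using sc by (subst summable_Suc_iff)
  have sd1: "summable (\<lambda>m. d (Suc m) *\<^sub>R op_pow A (Suc m))"
    using sd by (subst summable_Suc_iff)
  have hc: "(\<Sum>m. c m *\<^sub>R op_pow A m) = c 0 *\<^sub>R id_blinfun + (\<Sum>m. c (Suc m) *\<^sub>R op_pow A (Suc m))"
    using suminf_split_head[OF sc] by simp
  have hd: "(\<Sum>m. d m *\<^sub>R op_pow A m) = d 0 *\<^sub>R id_blinfun + (\<Sum>m. d (Suc m) *\<^sub>R op_pow A (Suc m))"
    using suminf_split_head[OF sd] by simp
  have diff: "(\<Sum>m. c (Suc m) *\<^sub>R op_pow A (Suc m)) - (\<Sum>m. c m *\<^sub>R op_pow A (Suc m)) = (\<Sum>m. d (Suc m) *\<^sub>R op_pow A (Suc m))"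
    unfolding suminf_diff[OF sc1 sc'] by (simp add: cd[symmetric] scaleR_diff_left)
  have "A o\<^sub>L (\<Sum>m. c m *\<^sub>R op_pow A m) = (\<Sum>m. c m *\<^sub>R op_pow A (Suc m))"
    using bounded_linear.suminf[OF blL sc] by simp
  then show "(id_blinfun - A) o\<^sub>L (\<Sum>m. c m *\<^sub>R op_pow A m) = (\<Sum>m. d m *\<^sub>R op_pow A m)"
    using hc hd diff c0 by (simp add: comp_diff_left algebra_simps)
  have "(\<Sum>m. c m *\<^sub>R op_pow A m) o\<^sub>L A = (\<Sum>m. c m *\<^sub>R op_pow A (Suc m))"
    using bounded_linear.suminf[OF blR sc] by (simp add: op_pow_comm)
  then show "(\<Sum>m. c m *\<^sub>R op_pow A m) o\<^sub>L (id_blinfun - A) = (\<Sum>m. d m *\<^sub>R op_pow A m)"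
    using hc hd diff c0 by (simp add: comp_diff_right algebra_simps)
qed

lemma neumann:
  fixes A :: "'a::banach \<Rightarrow>\<^sub>L 'a"
  assumes K: "\<And>m. norm (op_pow A m) \<le> K * q ^ m" and q: "0 \<le> q" "q < 1"
  shows "summable (\<lambda>m. real ((m + s) choose s) *\<^sub>R op_pow A m)"
    and "op_pow (op_inv (id_blinfun - A)) (Suc s) = (\<Sum>m. real ((m + s) choose s) *\<^sub>R op_pow A m)"
proof -
  have summ: "summable (\<lambda>m. real ((m + s) choose s) *\<^sub>R op_pow A m)" for s
  proof (rule summable_comparison_test)
    show "summable (\<lambda>m. K * (real ((m + s) choose s) * q ^ m))"
      by (rule summable_mult[OF summable_choose_geom[OF q]])
    show "\<exists>N. \<forall>n\<ge>N. norm (real ((n + s) choose s) *\<^sub>R op_pow A n) \<le> K * (real ((n + s) choose s) * q ^ n)"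
      using K by (auto intro!: exI[of _ 0] simp: mult_left_mono mult.left_commute)
  qed
  then show "summable (\<lambda>m. real ((m + s) choose s) *\<^sub>R op_pow A m)" .
  define S where "S s = (\<Sum>m. real ((m + s) choose s) *\<^sub>R op_pow A m)" for s
  have step: "(id_blinfun - A) o\<^sub>L S (Suc s) = S s" for s
    unfolding S_def by (rule tele(1)[OF summ summ]) (simp_all add: of_nat_add[symmetric] del: of_nat_add)
  have sdelta: "summable (\<lambda>m. (if m = 0 then 1 else 0) *\<^sub>R op_pow A m)"
    by (rule summable_finite[of "{0}"]) auto
  have delta: "(\<Sum>m. (if m = 0 then 1 else 0) *\<^sub>R op_pow A m) = id_blinfun"
    by (subst suminf_finite[of "{0}"]) auto
  have s0: "summable (\<lambda>m. (1::real) *\<^sub>R op_pow A m)" using summ[of 0] by simp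
  have base1: "(id_blinfun - A) o\<^sub>L S 0 = id_blinfun"
    using tele(1)[OF s0 sdelta] delta by (simp add: S_def)
  have base2: "S 0 o\<^sub>L (id_blinfun - A) = id_blinfun"
    using tele(2)[OF s0 sdelta] delta by (simp add: S_def)
  have W: "op_inv (id_blinfun - A) = S 0" by (rule op_inv_eq[OF base2 base1])
  have "op_pow (op_inv (id_blinfun - A)) (Suc s) = S s" for s
  proof (induction s)
    case 0 then show ?case by (simp add: W)
  next
    case (Suc s)
    have "op_pow (op_inv (id_blinfun - A)) (Suc (Suc s)) = S 0 o\<^sub>L S s" using Suc by (simp add: W)
    also have "\<dots> = S 0 o\<^sub>L ((id_blinfun - A) o\<^sub>L S (Suc s))" by (simp add: step)
    also have "\<dots> = S (Suc s)" by (simp add: comp_assoc[symmetric] base2)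
    finally show ?case .
  qed
  then show "op_pow (op_inv (id_blinfun - A)) (Suc s) = (\<Sum>m. real ((m + s) choose s) *\<^sub>R op_pow A m)"
    by (simp add: S_def)
qed

lemma const_seq_zero:
  fixes f :: "nat \<Rightarrow> 'a::real_normed_vector"
  assumes c: "\<And>n. f n = f 0" and b: "\<And>n. norm (f n) \<le> K * q ^ n" and q: "0 \<le> q" "q < 1"
  shows "f 0 = 0"
proof -
  have "(\<lambda>n. K * q ^ n) \<longlonglongrightarrow> 0"
    using q by (intro tendsto_mult_right_zero LIMSEQ_power_zero) auto
  then have "f \<longlonglongrightarrow> 0"
    by (rule Lim_null_comparison[rotated]) (use b in auto)
  moreover have "f \<longlonglongrightarrow> f 0"
    by (rule Lim_transform_eventually[OF tendsto_const]) (use c in \<open>simp add: eq_commute\<close>)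
  ultimately show ?thesis using LIMSEQ_unique by blast
qed

lemma norm_comp3: "norm (a o\<^sub>L b o\<^sub>L c) \<le> norm a * norm b * norm c"
proof -
  have "norm (a o\<^sub>L b o\<^sub>L c) \<le> norm (a o\<^sub>L b) * norm c" by (rule norm_blinfun_compose)
  also have "\<dots> \<le> norm a * norm b * norm c" by (intro mult_right_mono norm_blinfun_compose norm_ge_zero)
  finally show ?thesis .
qed

context setting begin

definition "NN = T (-1) o\<^sub>L (A0 + A1)"
definition "XX = T 0 o\<^sub>L A1"

lemma decay:
  "\<exists>Mn Mp \<rho>. 0 < \<rho> \<and> \<rho> < 1 \<and> 0 \<le> Mn \<and> 0 \<le> Mp \<and>
     (\<forall>m::nat. norm (T (- int m)) \<le> Mn * r0 ^ m) \<and> (\<forall>n::nat. norm (T (int n)) \<le> Mp * \<rho> ^ n)"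
proof -
  obtain Mn where Mn: "\<And>k. norm (T k) \<le> Mn * r0 powi (-k)"
    using T_norm_bound[OF r0(1) r0(4)] by blast
  define r1 where "r1 = 1 + \<theta> / 2"
  have r1: "0 < r1" "r1 < 1 + \<theta>" "1 < r1" using theta by (auto simp: r1_def)
  obtain Mp where Mp: "\<And>k. norm (T k) \<le> Mp * r1 powi (-k)"
    using T_norm_bound[OF r1(1) r1(2)] by blast
  have "\<forall>m::nat. norm (T (- int m)) \<le> Mn * r0 ^ m"
  proof
    fix m :: nat show "norm (T (- int m)) \<le> Mn * r0 ^ m" using Mn[of "- int m"] by (simp add: power_int_of_nat)
  qed
  moreover have "\<forall>n::nat. norm (T (int n)) \<le> Mp * (inverse r1) ^ n"
  proof
    fix n :: nat show "norm (T (int n)) \<le> Mp * (inverse r1) ^ n"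
      using Mp[of "int n"] by (simp add: power_int_minus power_int_of_nat power_inverse)
  qed
  moreover have "0 \<le> Mn" using Mn[of 0] norm_ge_zero[of "T 0"] by (simp del: norm_ge_zero)
  moreover have "0 \<le> Mp" using Mp[of 0] norm_ge_zero[of "T 0"] by (simp del: norm_ge_zero)
  moreover have "0 < inverse r1" "inverse r1 < 1" using r1 by (auto simp: inverse_less_1_iff)
  ultimately show ?thesis by (intro exI[of _ Mn] exI[of _ Mp] exI[of _ "inverse r1"]) simp
qed

lemma vanish_D:
  assumes m: "m \<ge> 1"
  shows "T (- int m) o\<^sub>L (A0 + A1) o\<^sub>L T 0 = 0"
proof -
  obtain Mn Mp \<rho> where d: "0 < \<rho>" "\<rho> < 1" "0 \<le> Mn" "0 \<le> Mp"
    "\<And>m::nat. norm (T (- int m)) \<le> Mn * r0 ^ m" "\<And>n::nat. norm (T (int n)) \<le> Mp * \<rho> ^ n"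
    using decay by blast
  define f where "f n = T (- int (m + n)) o\<^sub>L (A0 + A1) o\<^sub>L T (int n)" for n
  have step: "f (Suc n) = f n" for n
  proof -
    have k: "- int (m + n) \<noteq> 0" using m by simp
    have L: "T (- int (m + n)) o\<^sub>L (A0 + A1) = - (T (- int (m + n) - 1) o\<^sub>L A1)"
      using rec_L[of "- int (m + n)"] k m by (simp add: eq_neg_iff_add_eq_0)
    have R: "A1 o\<^sub>L T (int n) = - ((A0 + A1) o\<^sub>L T (int n + 1))"
      using rec_R[of "int n + 1"] by (simp add: eq_neg_iff_add_eq_0 add.commute)
    have "f n = - (T (- int (m + n) - 1) o\<^sub>L (A1 o\<^sub>L T (int n)))"
      unfolding f_def L by (simp add: comp_assoc)
    also have "\<dots> = T (- int (m + n) - 1) o\<^sub>L (A0 + A1) o\<^sub>L T (int n + 1)"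
      unfolding R by (simp add: comp_assoc)
    finally have "f n = T (- int (m + n) - 1) o\<^sub>L (A0 + A1) o\<^sub>L T (int n + 1)" .
    moreover have "- int (m + n) - 1 = - int (m + Suc n)" "int n + 1 = int (Suc n)" by simp_all
    ultimately show ?thesis by (simp only: f_def)
  qed
  have c: "f n = f 0" for n by (induction n) (simp_all add: step)
  have b: "norm (f n) \<le> (Mn * norm (A0 + A1) * Mp) * r0 ^ n" for n
  proof -
    have "norm (f n) \<le> norm (T (- int (m + n))) * norm (A0 + A1) * norm (T (int n))"
      unfolding f_def by (rule norm_comp3)
    also have "\<dots> \<le> (Mn * r0 ^ (m + n)) * norm (A0 + A1) * (Mp * \<rho> ^ n)"
    proof -
      have t1: "norm (T (- int (m + n))) \<le> Mn * r0 ^ (m + n)" by (rule d(5))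
      have t2: "norm (T (int n)) \<le> Mp * \<rho> ^ n" by (rule d(6))
      show ?thesis using d r0 by (intro mult_mono t1 t2 order_refl) auto
    qed
    also have "\<dots> \<le> (Mn * r0 ^ n) * norm (A0 + A1) * Mp"
    proof -
      have "r0 ^ (m + n) \<le> r0 ^ n" using r0 by (intro power_decreasing) auto
      moreover have "\<rho> ^ n \<le> 1" using d by (intro power_le_one) auto
      ultimately show ?thesis using d r0 by (intro mult_mono mult_left_le order_refl) auto
    qed
    finally show ?thesis by (simp add: algebra_simps)
  qed
  have "f 0 = 0" by (rule const_seq_zero[OF c b]) (use r0 in auto)
  then show ?thesis by (simp add: f_def)
qed

lemma vanish_E: "T (-1) o\<^sub>L A1 o\<^sub>L T (int n + 1) = 0"
proof -
  obtain Mn Mp \<rho> where d: "0 < \<rho>" "\<rho> < 1" "0 \<le> Mn" "0 \<le> Mp"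
    "\<And>m::nat. norm (T (- int m)) \<le> Mn * r0 ^ m" "\<And>n::nat. norm (T (int n)) \<le> Mp * \<rho> ^ n"
    using decay by blast
  define g where "g q = T (- int (1 + q)) o\<^sub>L A1 o\<^sub>L T (int (n + 1 + q))" for q
  have step: "g (Suc q) = g q" for q
  proof -
    have R: "A1 o\<^sub>L T (int (n + 1 + q)) = - ((A0 + A1) o\<^sub>L T (int (n + 1 + q) + 1))"
      using rec_R[of "int (n + 1 + q) + 1"] by (simp add: eq_neg_iff_add_eq_0 add.commute)
    have L: "T (- int (1 + q)) o\<^sub>L (A0 + A1) = - (T (- int (1 + q) - 1) o\<^sub>L A1)"
      using rec_L[of "- int (1 + q)"] by (simp add: eq_neg_iff_add_eq_0)
    have "g q = - (T (- int (1 + q)) o\<^sub>L (A0 + A1) o\<^sub>L T (int (n + 1 + q) + 1))"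
      unfolding g_def comp_assoc R by simp
    also have "\<dots> = T (- int (1 + q) - 1) o\<^sub>L A1 o\<^sub>L T (int (n + 1 + q) + 1)"
      unfolding L by simp
    also have "\<dots> = g (Suc q)" by (simp add: g_def algebra_simps)
    finally show ?thesis by simp
  qed
  have c: "g q = g 0" for q by (induction q) (simp_all add: step)
  have b: "norm (g q) \<le> (Mn * norm A1 * Mp) * r0 ^ q" for q
  proof -
    have "norm (g q) \<le> norm (T (- int (1 + q))) * norm A1 * norm (T (int (n + 1 + q)))"
      unfolding g_def by (rule norm_comp3)
    also have "\<dots> \<le> (Mn * r0 ^ (1 + q)) * norm A1 * (Mp * \<rho> ^ (n + 1 + q))"
    proof -
      have t1: "norm (T (- int (1 + q))) \<le> Mn * r0 ^ (1 + q)" by (rule d(5))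
      have t2: "norm (T (int (n + 1 + q))) \<le> Mp * \<rho> ^ (n + 1 + q)" by (rule d(6))
      show ?thesis using d r0 by (intro mult_mono t1 t2 order_refl) auto
    qed
    also have "\<dots> \<le> (Mn * r0 ^ q) * norm A1 * Mp"
    proof -
      have "r0 ^ (1 + q) \<le> r0 ^ q" using r0 by (intro power_decreasing) auto
      moreover have "\<rho> ^ (n + 1 + q) \<le> 1" using d by (intro power_le_one) auto
      ultimately show ?thesis using d r0 by (intro mult_mono mult_left_le order_refl) auto
    qed
    finally show ?thesis by (simp add: algebra_simps)
  qed
  have "g 0 = 0" by (rule const_seq_zero[OF c b]) (use r0 in auto)
  then show ?thesis by (simp add: g_def add.commute)
qed

lemma neg_step: "T (- int (Suc (Suc m))) = - (T (- int (Suc m)) o\<^sub>L (A0 + A1) o\<^sub>L T (-1))"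
proof -
  have R0: "((A0 + A1) o\<^sub>L T 0) + (A1 o\<^sub>L T (-1)) = id_blinfun" using rec_R[of 0] by simp
  have L: "T (- int (Suc (Suc m))) o\<^sub>L A1 = - (T (- int (Suc m)) o\<^sub>L (A0 + A1))"
    using rec_L[of "- int (Suc m)"] by (simp add: eq_neg_iff_add_eq_0 add.commute algebra_simps)
  have D: "T (- int (Suc (Suc m))) o\<^sub>L (A0 + A1) o\<^sub>L T 0 = 0" by (rule vanish_D) simp
  have "T (- int (Suc (Suc m))) = T (- int (Suc (Suc m))) o\<^sub>L (((A0 + A1) o\<^sub>L T 0) + (A1 o\<^sub>L T (-1)))"
    unfolding R0 by simp
  also have "\<dots> = (T (- int (Suc (Suc m))) o\<^sub>L (A0 + A1) o\<^sub>L T 0) + (T (- int (Suc (Suc m))) o\<^sub>L A1 o\<^sub>L T (-1))"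
    by (simp only: comp_add_right[of "T (- int (Suc (Suc m)))" "(A0 + A1) o\<^sub>L T 0"] comp_assoc)
  also have "\<dots> = - (T (- int (Suc m)) o\<^sub>L (A0 + A1) o\<^sub>L T (-1))"
    unfolding D L by simp
  finally show ?thesis .
qed

lemma pos_step: "T (int (Suc n)) = - (T 0 o\<^sub>L A1 o\<^sub>L T (int n))"
proof -
  have L0: "(T 0 o\<^sub>L (A0 + A1)) + (T (-1) o\<^sub>L A1) = id_blinfun" using rec_L[of 0] by simp
  have R: "(A0 + A1) o\<^sub>L T (int n + 1) = - (A1 o\<^sub>L T (int n))"
    using rec_R[of "int n + 1"] by (simp add: eq_neg_iff_add_eq_0)
  have "T (int (Suc n)) = ((T 0 o\<^sub>L (A0 + A1)) + (T (-1) o\<^sub>L A1)) o\<^sub>L T (int n + 1)"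
    unfolding L0 by (simp add: add.commute)
  also have "\<dots> = (T 0 o\<^sub>L ((A0 + A1) o\<^sub>L T (int n + 1))) + (T (-1) o\<^sub>L A1 o\<^sub>L T (int n + 1))"
    by (simp only: comp_add_left comp_assoc)
  also have "\<dots> = - (T 0 o\<^sub>L A1 o\<^sub>L T (int n))"
    unfolding R vanish_E by (simp add: comp_assoc)
  finally show ?thesis .
qed

lemma Tneg: "T (- int (Suc m)) = ((-1) ^ m) *\<^sub>R (op_pow NN m o\<^sub>L T (-1))"
proof (induction m)
  case 0 then show ?case by simp
next
  case (Suc m)
  have "T (- int (Suc (Suc m))) = - (T (- int (Suc m)) o\<^sub>L (A0 + A1) o\<^sub>L T (-1))" by (rule neg_step)
  also have "\<dots> = - (((-1) ^ m) *\<^sub>R (op_pow NN m o\<^sub>L NN o\<^sub>L T (-1)))"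
    unfolding Suc NN_def by (simp add: comp_assoc)
  also have "\<dots> = ((-1) ^ Suc m) *\<^sub>R (op_pow NN (Suc m) o\<^sub>L T (-1))"
    by (simp add: op_pow_comm)
  finally show ?case .
qed

lemma Tpos: "T (int n) = ((-1) ^ n) *\<^sub>R (op_pow XX n o\<^sub>L T 0)"
proof (induction n)
  case 0 then show ?case by simp
next
  case (Suc n)
  have "T (int (Suc n)) = - (T 0 o\<^sub>L A1 o\<^sub>L T (int n))" by (rule pos_step)
  also have "\<dots> = ((-1) ^ Suc n) *\<^sub>R (op_pow XX (Suc n) o\<^sub>L T 0)"
    unfolding Suc XX_def by (simp add: comp_assoc)
  finally show ?case .
qed

lemma NN_bound: "\<exists>K. \<forall>m. norm (op_pow NN m) \<le> K * r0 ^ m"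
proof -
  obtain Mn Mp \<rho> where d: "0 < \<rho>" "\<rho> < 1" "0 \<le> Mn" "0 \<le> Mp"
    "\<And>m::nat. norm (T (- int m)) \<le> Mn * r0 ^ m" "\<And>n::nat. norm (T (int n)) \<le> Mp * \<rho> ^ n"
    using decay by blast
  define K where "K = max 1 (Mn * norm (A0 + A1))"
  have "norm (op_pow NN m) \<le> K * r0 ^ m" for m
  proof (cases m)
    case 0
    have "norm (id_blinfun :: 'x \<Rightarrow>\<^sub>L 'x) \<le> K" unfolding K_def by (rule order_trans[OF norm_blinfun_id_le max.cobounded1])
    then show ?thesis using 0 by simp
  next
    case (Suc m')
    have "op_pow NN m = op_pow NN m' o\<^sub>L NN" using Suc by (simp only: op_pow_Suc')
    also have "\<dots> = op_pow NN m' o\<^sub>L T (-1) o\<^sub>L (A0 + A1)" by (simp only: NN_def comp_assoc)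
    also have "op_pow NN m' o\<^sub>L T (-1) = ((-1) ^ m') *\<^sub>R T (- int (Suc m'))"
    proof -
      have "((-1::real) ^ m' * (-1) ^ m') = 1" by (simp add: power_mult_distrib[symmetric])
      then show ?thesis unfolding Tneg[of m'] scaleR_scaleR by simp
    qed
    finally have "norm (op_pow NN m) \<le> norm (T (- int (Suc m'))) * norm (A0 + A1)"
      using norm_blinfun_compose by (simp add: norm_power)
    also have "\<dots> \<le> Mn * r0 ^ m * norm (A0 + A1)"
      using d(5)[of "Suc m'"] Suc by (intro mult_right_mono) auto
    also have "\<dots> \<le> K * r0 ^ m"
      using r0 by (simp add: K_def mult.commute mult.left_commute mult_right_mono)
    finally show ?thesis .
  qed
  then show ?thesis by blast
qed

lemma XX_bound: "\<exists>K \<rho>. 0 \<le> \<rho> \<and> \<rho> < 1 \<and> (\<forall>n. norm (op_pow XX n) \<le> K * \<rho> ^ n)"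
proof -
  obtain Mn Mp \<rho> where d: "0 < \<rho>" "\<rho> < 1" "0 \<le> Mn" "0 \<le> Mp"
    "\<And>m::nat. norm (T (- int m)) \<le> Mn * r0 ^ m" "\<And>n::nat. norm (T (int n)) \<le> Mp * \<rho> ^ n"
    using decay by blast
  define K where "K = max 1 (Mp * norm A1 / \<rho>)"
  have "norm (op_pow XX n) \<le> K * \<rho> ^ n" for n
  proof (cases n)
    case 0
    have "norm (id_blinfun :: 'x \<Rightarrow>\<^sub>L 'x) \<le> K" unfolding K_def by (rule order_trans[OF norm_blinfun_id_le max.cobounded1])
    then show ?thesis using 0 by simp
  next
    case (Suc n')
    have "op_pow XX n = op_pow XX n' o\<^sub>L XX" using Suc by (simp only: op_pow_Suc')
    also have "\<dots> = op_pow XX n' o\<^sub>L T 0 o\<^sub>L A1" by (simp only: XX_def comp_assoc)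
    also have "op_pow XX n' o\<^sub>L T 0 = ((-1) ^ n') *\<^sub>R T (int n')"
    proof -
      have "((-1::real) ^ n' * (-1) ^ n') = 1" by (simp add: power_mult_distrib[symmetric])
      then show ?thesis by (simp add: Tpos)
    qed
    finally have "norm (op_pow XX n) \<le> norm (T (int n')) * norm A1"
      using norm_blinfun_compose by (simp add: norm_power)
    also have "\<dots> \<le> Mp * \<rho> ^ n' * norm A1"
      using d by (intro mult_right_mono) auto
    also have "\<dots> = (Mp * norm A1 / \<rho>) * \<rho> ^ n"
      using Suc d by (simp add: field_simps)
    also have "\<dots> \<le> K * \<rho> ^ n"
      using d by (intro mult_right_mono) (auto simp: K_def)
    finally show ?thesis .
  qed
  then show ?thesis using d by (intro exI[of _ K] exI[of _ \<rho>]) auto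
qed

end

lemma tele_sum:
  fixes a :: "nat \<Rightarrow> 'v::real_normed_vector"
  assumes "(\<lambda>m. p m *\<^sub>R a m) \<longlonglongrightarrow> 0"
  shows "(\<Sum>m. p m *\<^sub>R a m - p (Suc m) *\<^sub>R a (Suc m)) = p 0 *\<^sub>R a 0"
  using sums_unique[OF telescope_sums'[OF assms]] by simp

context setting begin

lemma decay': obtains Mn Mp \<rho> where "0 < \<rho>" "\<rho> < 1" "0 \<le> Mn" "0 \<le> Mp"
    "\<And>m::nat. norm (T (- int m)) \<le> Mn * r0 ^ m" "\<And>n::nat. norm (T (int n)) \<le> Mp * \<rho> ^ n"
proof -
  obtain Mn Mp \<rho> where d: "0 < \<rho>" "\<rho> < 1" "0 \<le> Mn" "0 \<le> Mp"
    "\<And>m::nat. norm (T (- int m)) \<le> Mn * r0 ^ m" "\<And>n::nat. norm (T (int n)) \<le> Mp * \<rho> ^ n"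
    using decay by blast
  show ?thesis by (rule that[OF d])
qed

lemma sumU:
  assumes b: "\<And>m. \<bar>\<beta> m\<bar> \<le> real ((m + k) choose k)"
  shows "summable (\<lambda>m. \<beta> m *\<^sub>R T (- int (Suc m)))"
proof -
  obtain Mn Mp \<rho> where d: "0 < \<rho>" "\<rho> < 1" "0 \<le> Mn" "0 \<le> Mp"
    "\<And>m::nat. norm (T (- int m)) \<le> Mn * r0 ^ m" "\<And>n::nat. norm (T (int n)) \<le> Mp * \<rho> ^ n"
    using decay by blast
  show ?thesis
  proof (rule summable_comparison_test)
    show "summable (\<lambda>m. Mn * (real ((m + k) choose k) * r0 ^ m))"
      using r0 by (intro summable_mult summable_choose_geom) auto
    have "norm (\<beta> m *\<^sub>R T (- int (Suc m))) \<le> Mn * (real ((m + k) choose k) * r0 ^ m)" for m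
    proof -
      have "norm (\<beta> m *\<^sub>R T (- int (Suc m))) = \<bar>\<beta> m\<bar> * norm (T (- int (Suc m)))" by simp
      also have "\<dots> \<le> real ((m + k) choose k) * (Mn * r0 ^ Suc m)"
        by (intro mult_mono b d(5)) auto
      also have "\<dots> \<le> real ((m + k) choose k) * (Mn * r0 ^ m)"
        using r0 d by (intro mult_left_mono mult_left_mono power_decreasing) auto
      finally show ?thesis by (simp add: algebra_simps)
    qed
    then show "\<exists>N. \<forall>n\<ge>N. norm (\<beta> n *\<^sub>R T (- int (Suc n))) \<le> Mn * (real ((n + k) choose k) * r0 ^ n)"
      by blast
  qed
qed

lemma sumV:
  assumes b: "\<And>m. \<bar>\<beta> m\<bar> \<le> real ((m + k) choose k)"
  shows "summable (\<lambda>m. \<beta> m *\<^sub>R T (int m))"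
proof -
  obtain Mn Mp \<rho> where d: "0 < \<rho>" "\<rho> < 1" "0 \<le> Mn" "0 \<le> Mp"
    "\<And>m::nat. norm (T (- int m)) \<le> Mn * r0 ^ m" "\<And>n::nat. norm (T (int n)) \<le> Mp * \<rho> ^ n"
    using decay by blast
  show ?thesis
  proof (rule summable_comparison_test)
    show "summable (\<lambda>m. Mp * (real ((m + k) choose k) * \<rho> ^ m))"
      using d by (intro summable_mult summable_choose_geom) auto
    have "norm (\<beta> m *\<^sub>R T (int m)) \<le> Mp * (real ((m + k) choose k) * \<rho> ^ m)" for m
    proof -
      have "norm (\<beta> m *\<^sub>R T (int m)) = \<bar>\<beta> m\<bar> * norm (T (int m))" by simp
      also have "\<dots> \<le> real ((m + k) choose k) * (Mp * \<rho> ^ m)"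
        by (intro mult_mono b d(6)) auto
      finally show ?thesis by (simp add: algebra_simps)
    qed
    then show "\<exists>N. \<forall>n\<ge>N. norm (\<beta> n *\<^sub>R T (int n)) \<le> Mp * (real ((n + k) choose k) * \<rho> ^ n)"
      by blast
  qed
qed

lemma blL: "bounded_linear (\<lambda>X. C o\<^sub>L X)"
  by (rule bounded_bilinear.bounded_linear_right[OF bounded_bilinear_blinfun_compose])
lemma blR: "bounded_linear (\<lambda>X. X o\<^sub>L C)"
  by (rule bounded_bilinear.bounded_linear_left[OF bounded_bilinear_blinfun_compose])

lemma teleU:
  assumes sb: "\<And>m. \<bar>\<beta> m\<bar> \<le> real ((m + ka) choose ka)"
    and sg: "\<And>m. \<bar>\<gamma> m\<bar> \<le> real ((m + kb) choose kb)"
    and sp: "\<And>m. \<bar>p m\<bar> \<le> real ((m + kc) choose kc)"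
    and pd: "\<And>m. p m = \<gamma> m - \<beta> m" and ps: "\<And>m. p (Suc m) = \<beta> m"
  shows "(A0 o\<^sub>L (\<Sum>m. \<beta> m *\<^sub>R T (- int (Suc m)))) + (A1 o\<^sub>L (\<Sum>m. \<gamma> m *\<^sub>R T (- int (Suc m))))
          = p 0 *\<^sub>R (A1 o\<^sub>L T (-1))"
proof -
  define a where "a m = A1 o\<^sub>L T (- int (Suc m))" for m
  have rec: "A0 o\<^sub>L T (- int (Suc m)) = - a (Suc m) - a m" for m
  proof -
    have "((A0 + A1) o\<^sub>L T (- int (Suc m))) + (A1 o\<^sub>L T (- int (Suc m) - 1)) = 0"
      using rec_R[of "- int (Suc m)"] by simp
    moreover have "- int (Suc m) - 1 = - int (Suc (Suc m))" by simp
    ultimately show ?thesis unfolding a_def comp_add_left by (simp add: algebra_simps eq_neg_iff_add_eq_0)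
  qed
  have s1: "summable (\<lambda>m. \<beta> m *\<^sub>R (A0 o\<^sub>L T (- int (Suc m))))"
    using bounded_linear.summable[OF blL[of A0] sumU[OF sb]] by simp
  have s2: "summable (\<lambda>m. \<gamma> m *\<^sub>R a m)"
    using bounded_linear.summable[OF blL[of A1] sumU[OF sg]] by (simp add: a_def)
  have lim: "(\<lambda>m. p m *\<^sub>R a m) \<longlonglongrightarrow> 0"
    using summable_LIMSEQ_zero[OF bounded_linear.summable[OF blL[of A1] sumU[OF sp]]] by (simp add: a_def)
  have "(A0 o\<^sub>L (\<Sum>m. \<beta> m *\<^sub>R T (- int (Suc m)))) + (A1 o\<^sub>L (\<Sum>m. \<gamma> m *\<^sub>R T (- int (Suc m))))
      = (\<Sum>m. \<beta> m *\<^sub>R (A0 o\<^sub>L T (- int (Suc m)))) + (\<Sum>m. \<gamma> m *\<^sub>R a m)"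
    using bounded_linear.suminf[OF blL[of A0] sumU[OF sb]] bounded_linear.suminf[OF blL[of A1] sumU[OF sg]]
    by (simp add: a_def)
  also have "\<dots> = (\<Sum>m. \<beta> m *\<^sub>R (A0 o\<^sub>L T (- int (Suc m))) + \<gamma> m *\<^sub>R a m)"
    by (rule suminf_add[OF s1 s2])
  also have "\<dots> = (\<Sum>m. p m *\<^sub>R a m - p (Suc m) *\<^sub>R a (Suc m))"
    unfolding rec ps unfolding pd by (simp add: algebra_simps)
  also have "\<dots> = p 0 *\<^sub>R a 0" by (rule tele_sum[OF lim])
  finally show ?thesis by (simp add: a_def)
qed

lemma teleV:
  assumes sb: "\<And>m. \<bar>\<beta> m\<bar> \<le> real ((m + ka) choose ka)"
    and sg: "\<And>m. \<bar>\<gamma> m\<bar> \<le> real ((m + kb) choose kb)"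
    and sp: "\<And>m. \<bar>P m\<bar> \<le> real ((m + kc) choose kc)"
    and h1: "\<And>l. P l = - \<beta> (Suc l)" and h2: "\<And>l. P (Suc l) = \<beta> (Suc l) - \<gamma> (Suc l)"
  shows "(A0 o\<^sub>L (\<Sum>l. \<beta> l *\<^sub>R T (int l))) + (A1 o\<^sub>L (\<Sum>l. \<gamma> l *\<^sub>R T (int l)))
          = \<beta> 0 *\<^sub>R (id_blinfun - (A1 o\<^sub>L T (-1))) + (\<gamma> 0 - \<beta> 0 + P 0) *\<^sub>R (A1 o\<^sub>L T 0)"
proof -
  define e where "e l = A1 o\<^sub>L T (int l)" for l
  have g0: "(A0 + A1) o\<^sub>L T 0 = id_blinfun - (A1 o\<^sub>L T (-1))"
    using rec_R[of 0] by (simp add: algebra_simps eq_diff_eq)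
  have gS: "(A0 + A1) o\<^sub>L T (int (Suc l)) = - e l" for l
  proof -
    have "((A0 + A1) o\<^sub>L T (int l + 1)) + (A1 o\<^sub>L T (int l)) = 0" using rec_R[of "int l + 1"] by simp
    then show ?thesis by (simp add: e_def eq_neg_iff_add_eq_0 add.commute)
  qed
  have A0e: "A0 o\<^sub>L X = ((A0 + A1) o\<^sub>L X) - (A1 o\<^sub>L X)" for X by (simp add: comp_add_left)
  define f where "f l = \<beta> l *\<^sub>R (A0 o\<^sub>L T (int l)) + \<gamma> l *\<^sub>R e l" for l
  have s1: "summable (\<lambda>m. \<beta> m *\<^sub>R (A0 o\<^sub>L T (int m)))"
    using bounded_linear.summable[OF blL[of A0] sumV[OF sb]] by simp
  have s2: "summable (\<lambda>m. \<gamma> m *\<^sub>R e m)"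
    using bounded_linear.summable[OF blL[of A1] sumV[OF sg]] by (simp add: e_def)
  have sf: "summable f" unfolding f_def by (rule summable_add[OF s1 s2])
  have lim: "(\<lambda>m. P m *\<^sub>R e m) \<longlonglongrightarrow> 0"
    using summable_LIMSEQ_zero[OF bounded_linear.summable[OF blL[of A1] sumV[OF sp]]] by (simp add: e_def)
  have "(A0 o\<^sub>L (\<Sum>l. \<beta> l *\<^sub>R T (int l))) + (A1 o\<^sub>L (\<Sum>l. \<gamma> l *\<^sub>R T (int l)))
      = (\<Sum>m. \<beta> m *\<^sub>R (A0 o\<^sub>L T (int m))) + (\<Sum>m. \<gamma> m *\<^sub>R e m)"
    using bounded_linear.suminf[OF blL[of A0] sumV[OF sb]] bounded_linear.suminf[OF blL[of A1] sumV[OF sg]]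
    by (simp add: e_def)
  also have "\<dots> = suminf f" unfolding f_def by (rule suminf_add[OF s1 s2])
  also have "\<dots> = f 0 + (\<Sum>l. f (Suc l))" using suminf_split_head[OF sf] by simp
  also have "(\<lambda>l. f (Suc l)) = (\<lambda>l. P l *\<^sub>R e l - P (Suc l) *\<^sub>R e (Suc l))"
  proof
    fix l
    have "f (Suc l) = \<beta> (Suc l) *\<^sub>R (- e l - e (Suc l)) + \<gamma> (Suc l) *\<^sub>R e (Suc l)"
      unfolding f_def A0e gS by (simp add: e_def)
    also have "\<dots> = P l *\<^sub>R e l - P (Suc l) *\<^sub>R e (Suc l)"
      unfolding h2 unfolding h1 by (simp add: algebra_simps)
    finally show "f (Suc l) = P l *\<^sub>R e l - P (Suc l) *\<^sub>R e (Suc l)" .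
  qed
  also have "(\<Sum>l. P l *\<^sub>R e l - P (Suc l) *\<^sub>R e (Suc l)) = P 0 *\<^sub>R e 0" by (rule tele_sum[OF lim])
  also have "f 0 = \<beta> 0 *\<^sub>R (id_blinfun - (A1 o\<^sub>L T (-1))) + (\<gamma> 0 - \<beta> 0) *\<^sub>R e 0"
    unfolding f_def A0e of_nat_0 g0 by (simp add: e_def algebra_simps)
  finally show ?thesis by (simp add: e_def algebra_simps)
qed

definition "bU s m = (-1::real) ^ Suc m * real ((s + m) choose s)"
definition "cV s l = (-1::real) ^ l * real (l choose s) * (-1) ^ s"
definition "Sneg s = (\<Sum>m. bU s m *\<^sub>R T (- int (Suc m)))"
definition "Spos s = (\<Sum>l. cV s l *\<^sub>R T (int l))"

lemma abs_bU: "\<bar>bU s m\<bar> = real ((s + m) choose s)"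
  by (simp add: bU_def abs_mult)
lemma abs_cV: "\<bar>cV s l\<bar> = real (l choose s)"
  by (simp add: cV_def abs_mult)

lemma bU_bound: "\<bar>bU s m\<bar> \<le> real ((m + s) choose s)"
  unfolding abs_bU by (simp only: add.commute order_refl)
lemma bU_bound': "\<bar>bU s m\<bar> \<le> real ((m + Suc s) choose Suc s)"
proof -
  have "(s + m) choose s = (s + m) choose m" using binomial_symmetric[of s "s + m"] by simp
  also have "\<dots> \<le> (m + Suc s) choose m" by (rule binomial_right_mono) simp
  also have "\<dots> = (m + Suc s) choose Suc s" using binomial_symmetric[of m "m + Suc s"] by simp
  finally show ?thesis unfolding abs_bU by (rule of_nat_mono)
qed
lemma cV_bound: "\<bar>cV s l\<bar> \<le> real ((l + s) choose s)"
  unfolding abs_cV by (rule of_nat_mono, rule binomial_right_mono) simp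
lemma cV_bound': "\<bar>cV (Suc s) (Suc l)\<bar> \<le> real ((l + Suc s) choose Suc s)"
  unfolding abs_cV by (rule of_nat_mono, rule binomial_right_mono) simp

lemma Un_summable: "summable (\<lambda>m. bU s m *\<^sub>R T (- int (Suc m)))"
  by (rule sumU[OF bU_bound])
lemma Vp_summable: "summable (\<lambda>l. cV s l *\<^sub>R T (int l))"
  by (rule sumV[OF cV_bound])

lemma A0_Un0: "A0 o\<^sub>L Sneg 0 = A1 o\<^sub>L T (-1)"
proof -
  have "(A0 o\<^sub>L (\<Sum>m. bU 0 m *\<^sub>R T (- int (Suc m)))) + (A1 o\<^sub>L (\<Sum>m. (\<lambda>_. 0::real) m *\<^sub>R T (- int (Suc m))))
      = (\<lambda>m. (-1::real) ^ m) 0 *\<^sub>R (A1 o\<^sub>L T (-1))"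
    by (rule teleU[where ka = 0 and kb = 0 and kc = 0]) (auto simp: bU_def)
  then show ?thesis by (simp add: Sneg_def)
qed

lemma A0_UnS: "(A0 o\<^sub>L Sneg (Suc s)) + (A1 o\<^sub>L Sneg s) = 0"
proof -
  have "(A0 o\<^sub>L (\<Sum>m. bU (Suc s) m *\<^sub>R T (- int (Suc m)))) + (A1 o\<^sub>L (\<Sum>m. bU s m *\<^sub>R T (- int (Suc m))))
      = (\<lambda>m. (-1::real) ^ m * real ((s + m) choose Suc s)) 0 *\<^sub>R (A1 o\<^sub>L T (-1))"
  proof (rule teleU[OF bU_bound bU_bound'])
    show "\<bar>(-1::real) ^ m * real ((s + m) choose Suc s)\<bar> \<le> real ((m + Suc s) choose Suc s)" for m
    proof -
      have "\<bar>(-1::real) ^ m * real ((s + m) choose Suc s)\<bar> = real ((s + m) choose Suc s)" by (simp add: abs_mult)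
      also have "\<dots> \<le> real ((m + Suc s) choose Suc s)" by (rule of_nat_mono, rule binomial_right_mono) simp
      finally show ?thesis .
    qed
    show "(-1) ^ m * real ((s + m) choose Suc s) = bU s m - bU (Suc s) m" for m
      by (simp add: bU_def algebra_simps)
    show "(-1) ^ Suc m * real ((s + Suc m) choose Suc s) = bU (Suc s) m" for m
      by (simp add: bU_def)
  qed
  then show ?thesis by (simp add: Sneg_def)
qed

lemma A0_Vp0: "A0 o\<^sub>L Spos 0 = id_blinfun - (A1 o\<^sub>L T (-1))"
proof -
  have "(A0 o\<^sub>L (\<Sum>l. cV 0 l *\<^sub>R T (int l))) + (A1 o\<^sub>L (\<Sum>l. (\<lambda>_. 0::real) l *\<^sub>R T (int l)))
      = cV 0 0 *\<^sub>R (id_blinfun - (A1 o\<^sub>L T (-1))) + ((\<lambda>_. 0::real) 0 - cV 0 0 + (\<lambda>l. (-1::real) ^ l) 0) *\<^sub>R (A1 o\<^sub>L T 0)"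
    by (rule teleV[where ka = 0 and kb = 0 and kc = 0]) (auto simp: cV_def)
  then show ?thesis by (simp add: Spos_def cV_def)
qed

lemma A0_VpS: "(A0 o\<^sub>L Spos (Suc s)) + (A1 o\<^sub>L Spos s) = 0"
proof -
  have "(A0 o\<^sub>L (\<Sum>l. cV (Suc s) l *\<^sub>R T (int l))) + (A1 o\<^sub>L (\<Sum>l. cV s l *\<^sub>R T (int l)))
      = cV (Suc s) 0 *\<^sub>R (id_blinfun - (A1 o\<^sub>L T (-1))) + (cV s 0 - cV (Suc s) 0 + (\<lambda>l. - cV (Suc s) (Suc l)) 0) *\<^sub>R (A1 o\<^sub>L T 0)"
  proof (rule teleV[OF cV_bound cV_bound])
    show "\<bar>- cV (Suc s) (Suc m)\<bar> \<le> real ((m + Suc s) choose Suc s)" for m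
      using cV_bound'[of s m] by simp
    show "- cV (Suc s) (Suc l) = - cV (Suc s) (Suc l)" for l by simp
    show "- cV (Suc s) (Suc (Suc l)) = cV (Suc s) (Suc l) - cV s (Suc l)" for l
      by (simp add: cV_def algebra_simps)
  qed
  moreover have "cV (Suc s) 0 = 0" by (simp add: cV_def)
  moreover have "cV s 0 - cV (Suc s) 0 - cV (Suc s) 1 = 0"
    by (cases s) (simp_all add: cV_def)
  ultimately show ?thesis by (simp add: Spos_def)
qed

end

context setting begin

lemma Sneg_closed: "Sneg s = - (op_pow (op_inv (id_blinfun - (T (-1) o\<^sub>L (A0 + A1)))) (s + 1) o\<^sub>L T (-1))"
proof -
  obtain K where K: "\<And>m. norm (op_pow NN m) \<le> K * r0 ^ m" using NN_bound by blast
  note nm = neumann[OF K _ r0(3)]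
  have summ: "summable (\<lambda>m. real ((m + s) choose s) *\<^sub>R op_pow NN m)" using nm(1) r0 by simp
  have tm: "bU s m *\<^sub>R T (- int (Suc m)) = - ((real ((m + s) choose s) *\<^sub>R op_pow NN m) o\<^sub>L T (-1))" for m
  proof -
    have "((-1::real) ^ Suc m * (-1) ^ m) = -1" by (simp add: power_mult_distrib[symmetric])
    then show ?thesis unfolding Tneg bU_def scaleR_scaleR
      by (simp add: add.commute mult.assoc[symmetric])
  qed
  have "Sneg s = (\<Sum>m. - ((real ((m + s) choose s) *\<^sub>R op_pow NN m) o\<^sub>L T (-1)))"
    unfolding Sneg_def tm ..
  also have "\<dots> = - (\<Sum>m. (real ((m + s) choose s) *\<^sub>R op_pow NN m) o\<^sub>L T (-1))"
    by (rule suminf_minus[OF bounded_linear.summable[OF blR summ]])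
  also have "(\<Sum>m. (real ((m + s) choose s) *\<^sub>R op_pow NN m) o\<^sub>L T (-1)) = (\<Sum>m. real ((m + s) choose s) *\<^sub>R op_pow NN m) o\<^sub>L T (-1)"
    by (rule bounded_linear.suminf[OF blR summ, symmetric])
  also have "(\<Sum>m. real ((m + s) choose s) *\<^sub>R op_pow NN m) = op_pow (op_inv (id_blinfun - NN)) (Suc s)"
    using nm(2) r0 by simp
  finally show ?thesis by (simp add: NN_def)
qed

lemma Spos_closed: "Spos s = ((-1::real) ^ s) *\<^sub>R
    (op_pow (op_inv (id_blinfun - (T 0 o\<^sub>L A1))) (s + 1) o\<^sub>L op_pow (T 0 o\<^sub>L A1) s o\<^sub>L T 0)"
proof -
  obtain K \<rho> where K: "0 \<le> \<rho>" "\<rho> < 1" "\<And>n. norm (op_pow XX n) \<le> K * \<rho> ^ n" using XX_bound by blast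
  note nm = neumann[OF K(3) K(1) K(2)]
  define h where "h l = ((-1::real) ^ s * real (l choose s)) *\<^sub>R (op_pow XX l o\<^sub>L T 0)" for l
  have tm: "cV s l *\<^sub>R T (int l) = h l" for l
  proof -
    have "((-1::real) ^ l * (-1) ^ l) = 1" by (simp add: power_mult_distrib[symmetric])
    then show ?thesis unfolding Tpos cV_def h_def scaleR_scaleR
      by (simp add: algebra_simps)
  qed
  have sh: "summable h" using Vp_summable[of s] unfolding tm .
  have h0: "h i = 0" if "i < s" for i using that by (simp add: h_def)
  have "suminf h = (\<Sum>m. h (m + s))"
    using sums_unique[OF iffD2[OF sums_zero_iff_shift[of s h, OF h0] summable_sums[OF sh]]] by simp
  also have "(\<lambda>m. h (m + s)) = (\<lambda>m. ((-1::real) ^ s) *\<^sub>R ((real ((m + s) choose s) *\<^sub>R op_pow XX m) o\<^sub>L (op_pow XX s o\<^sub>L T 0)))"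
    by (rule ext) (simp add: h_def op_pow_add comp_assoc)
  also have "(\<Sum>m. ((-1::real) ^ s) *\<^sub>R ((real ((m + s) choose s) *\<^sub>R op_pow XX m) o\<^sub>L (op_pow XX s o\<^sub>L T 0)))
      = ((-1::real) ^ s) *\<^sub>R ((\<Sum>m. real ((m + s) choose s) *\<^sub>R op_pow XX m) o\<^sub>L (op_pow XX s o\<^sub>L T 0))"
  proof -
    define W where "W = op_pow XX s o\<^sub>L T 0"
    have sW: "summable (\<lambda>m. (real ((m + s) choose s) *\<^sub>R op_pow XX m) o\<^sub>L W)"
      by (rule bounded_linear.summable[OF blR nm(1)])
    have e1: "(\<Sum>m. real ((m + s) choose s) *\<^sub>R op_pow XX m) o\<^sub>L W = (\<Sum>m. (real ((m + s) choose s) *\<^sub>R op_pow XX m) o\<^sub>L W)"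
      by (rule bounded_linear.suminf[OF blR nm(1)])
    have e2: "((-1::real) ^ s) *\<^sub>R (\<Sum>m. (real ((m + s) choose s) *\<^sub>R op_pow XX m) o\<^sub>L W)
        = (\<Sum>m. ((-1::real) ^ s) *\<^sub>R ((real ((m + s) choose s) *\<^sub>R op_pow XX m) o\<^sub>L W))"
      by (rule suminf_scaleR_right[OF sW])
    show ?thesis unfolding W_def[symmetric] e1 e2 ..
  qed
  also have "(\<Sum>m. real ((m + s) choose s) *\<^sub>R op_pow XX m) = op_pow (op_inv (id_blinfun - XX)) (Suc s)"
    using nm(2) by simp
  finally show ?thesis unfolding Spos_def tm by (simp add: XX_def comp_assoc)
qed

definition "KK s = Sneg s + Spos s"

lemma KK0: "A0 o\<^sub>L KK 0 = id_blinfun"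
  unfolding KK_def comp_add_right A0_Un0 A0_Vp0 by simp

lemma KKS: "(A0 o\<^sub>L KK (Suc s)) + (A1 o\<^sub>L KK s) = 0"
proof -
  have "(A0 o\<^sub>L KK (Suc s)) + (A1 o\<^sub>L KK s) = ((A0 o\<^sub>L Sneg (Suc s)) + (A1 o\<^sub>L Sneg s)) + ((A0 o\<^sub>L Spos (Suc s)) + (A1 o\<^sub>L Spos s))"
    unfolding KK_def comp_add_right by (simp add: algebra_simps)
  then show ?thesis using A0_UnS A0_VpS by simp
qed

lemma A0_inj: "blinfun_apply A0 u = blinfun_apply A0 v \<Longrightarrow> u = v"
proof -
  assume e: "blinfun_apply A0 u = blinfun_apply A0 v"
  have z: "0 \<in> SS" using eps by (simp add: V_set_def)
  have "Az 0 = A0" by (simp add: Az_def cscale_op_def)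
  then show "u = v" using RA_apply[OF z, of u] RA_apply[OF z, of v] e by simp
qed

lemma solution:
  fixes G :: "int \<Rightarrow> 'y" and x :: "int \<Rightarrow> 'x"
  assumes x0: "x (-1) = c" and xr: "\<And>t. t \<ge> 0 \<Longrightarrow> blinfun_apply A0 (x t) + blinfun_apply A1 (x (t - 1)) = G t"
  shows "x (int t) = (\<Sum>s=0..t. blinfun_apply (KK s) (G (int t - int s))) - blinfun_apply (KK t) (blinfun_apply A1 c)"
proof -
  define S where "S t = (\<Sum>s=0..t. blinfun_apply (KK s) (G (int t - int s))) - blinfun_apply (KK t) (blinfun_apply A1 c)" for t
  have KK0': "blinfun_apply A0 (blinfun_apply (KK 0) v) = v" for v
    using KK0 by (metis blinfun_apply_blinfun_compose id_blinfun.rep_eq)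
  have KKS': "blinfun_apply A0 (blinfun_apply (KK (Suc s)) v) = - blinfun_apply A1 (blinfun_apply (KK s) v)" for s v
  proof -
    have "blinfun_apply ((A0 o\<^sub>L KK (Suc s)) + (A1 o\<^sub>L KK s)) v = 0" using KKS by simp
    then show ?thesis by (simp add: blinfun.add_left eq_neg_iff_add_eq_0)
  qed
  have S0: "blinfun_apply A0 (S 0) + blinfun_apply A1 c = G 0"
    by (simp add: S_def blinfun.diff_right KK0')
  have SS': "blinfun_apply A0 (S (Suc t)) + blinfun_apply A1 (S t) = G (int (Suc t))" for t
  proof -
    have "(\<Sum>s=0..Suc t. blinfun_apply (KK s) (G (int (Suc t) - int s)))
        = blinfun_apply (KK 0) (G (int (Suc t))) + (\<Sum>s=0..t. blinfun_apply (KK (Suc s)) (G (int t - int s)))"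
      by (subst sum.atLeast0_atMost_Suc_shift) (simp add: o_def)
    then have "blinfun_apply A0 (S (Suc t)) = G (int (Suc t)) - (\<Sum>s=0..t. blinfun_apply A1 (blinfun_apply (KK s) (G (int t - int s))))
        + blinfun_apply A1 (blinfun_apply (KK t) (blinfun_apply A1 c))"
      by (simp add: S_def blinfun.diff_right blinfun.add_right blinfun.sum_right KK0' KKS' sum_negf)
    moreover have "blinfun_apply A1 (S t) = (\<Sum>s=0..t. blinfun_apply A1 (blinfun_apply (KK s) (G (int t - int s))))
        - blinfun_apply A1 (blinfun_apply (KK t) (blinfun_apply A1 c))"
      by (simp add: S_def blinfun.diff_right blinfun.sum_right)
    ultimately show ?thesis by simp
  qed
  have "x (int t) = S t"
  proof (induction t)
    case 0
    have "blinfun_apply A0 (x 0) = blinfun_apply A0 (S 0)"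
      using xr[of 0] S0 x0 by (simp add: eq_diff_eq[symmetric])
    then show ?case by (simp add: A0_inj)
  next
    case (Suc t)
    have "blinfun_apply A0 (x (int (Suc t))) + blinfun_apply A1 (x (int t)) = G (int (Suc t))"
      using xr[of "int (Suc t)"] by simp
    then have "blinfun_apply A0 (x (int (Suc t))) = blinfun_apply A0 (S (Suc t))"
      using SS'[of t] Suc by (simp add: eq_diff_eq[symmetric])
    then show ?case by (rule A0_inj)
  qed
  then show ?thesis by (simp add: S_def)
qed

lemma neg_series:
  fixes G :: "int \<Rightarrow> 'y"
  shows "summable (\<lambda>m. ((-1::real) ^ Suc m) *\<^sub>R blinfun_apply (T (- int (Suc m))) (nabla_neg G (Suc m) t))"
    and "(\<Sum>m. ((-1::real) ^ Suc m) *\<^sub>R blinfun_apply (T (- int (Suc m))) (nabla_neg G (Suc m) t))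
         = (\<Sum>s=0..t. blinfun_apply (Sneg s) (G (int t - int s)))"
proof -
  have tm: "((-1::real) ^ Suc m) *\<^sub>R blinfun_apply (T (- int (Suc m))) (nabla_neg G (Suc m) t)
      = (\<Sum>s=0..t. blinfun_apply (bU s m *\<^sub>R T (- int (Suc m))) (G (int t - int s)))" for m
    by (simp add: nabla_neg_def blinfun.sum_right blinfun.scaleR_right scaleR_sum_right bU_def
        blinfun.scaleR_left blinfun.minus_left scaleR_scaleR)
  have sm: "summable (\<lambda>m. blinfun_apply (bU s m *\<^sub>R T (- int (Suc m))) v)" for s v
    by (rule bounded_linear.summable[OF blinfun.bounded_linear_left Un_summable])
  show "summable (\<lambda>m. ((-1::real) ^ Suc m) *\<^sub>R blinfun_apply (T (- int (Suc m))) (nabla_neg G (Suc m) t))"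
    unfolding tm by (rule summable_sum) (rule sm)
  have "(\<Sum>m. ((-1::real) ^ Suc m) *\<^sub>R blinfun_apply (T (- int (Suc m))) (nabla_neg G (Suc m) t))
      = (\<Sum>s=0..t. \<Sum>m. blinfun_apply (bU s m *\<^sub>R T (- int (Suc m))) (G (int t - int s)))"
    unfolding tm by (rule suminf_sum) (rule sm)
  also have "\<dots> = (\<Sum>s=0..t. blinfun_apply (Sneg s) (G (int t - int s)))"
    unfolding Sneg_def
    by (intro sum.cong refl bounded_linear.suminf[OF blinfun.bounded_linear_left Un_summable, symmetric])
  finally show "(\<Sum>m. ((-1::real) ^ Suc m) *\<^sub>R blinfun_apply (T (- int (Suc m))) (nabla_neg G (Suc m) t))
         = (\<Sum>s=0..t. blinfun_apply (Sneg s) (G (int t - int s)))" .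
qed

lemma pos_series:
  fixes G :: "int \<Rightarrow> 'y"
  shows "summable (\<lambda>l. ((-1::real) ^ l) *\<^sub>R blinfun_apply (T (int l)) (nabla_pos_plus G l t))"
    and "(\<Sum>l. ((-1::real) ^ l) *\<^sub>R blinfun_apply (T (int l)) (nabla_pos_plus G l t))
         = (\<Sum>s=0..t. blinfun_apply (Spos s) (G (int t - int s)))"
proof -
  have np: "nabla_pos_plus G l t = (\<Sum>s=0..t. (real (l choose s) * (-1) ^ s) *\<^sub>R G (int t - int s))" for l
    unfolding nabla_pos_plus_def
    by (rule sum.mono_neutral_left) auto
  have tm: "((-1::real) ^ l) *\<^sub>R blinfun_apply (T (int l)) (nabla_pos_plus G l t)
      = (\<Sum>s=0..t. blinfun_apply (cV s l *\<^sub>R T (int l)) (G (int t - int s)))" for l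
    by (simp add: np blinfun.sum_right blinfun.scaleR_right scaleR_sum_right cV_def
        blinfun.scaleR_left scaleR_scaleR algebra_simps)
  have sm: "summable (\<lambda>l. blinfun_apply (cV s l *\<^sub>R T (int l)) v)" for s v
    by (rule bounded_linear.summable[OF blinfun.bounded_linear_left Vp_summable])
  show "summable (\<lambda>l. ((-1::real) ^ l) *\<^sub>R blinfun_apply (T (int l)) (nabla_pos_plus G l t))"
    unfolding tm by (rule summable_sum) (rule sm)
  have "(\<Sum>l. ((-1::real) ^ l) *\<^sub>R blinfun_apply (T (int l)) (nabla_pos_plus G l t))
      = (\<Sum>s=0..t. \<Sum>l. blinfun_apply (cV s l *\<^sub>R T (int l)) (G (int t - int s)))"
    unfolding tm by (rule suminf_sum) (rule sm)
  also have "\<dots> = (\<Sum>s=0..t. blinfun_apply (Spos s) (G (int t - int s)))"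
    unfolding Spos_def
    by (intro sum.cong refl bounded_linear.suminf[OF blinfun.bounded_linear_left Vp_summable, symmetric])
  finally show "(\<Sum>l. ((-1::real) ^ l) *\<^sub>R blinfun_apply (T (int l)) (nabla_pos_plus G l t))
         = (\<Sum>s=0..t. blinfun_apply (Spos s) (G (int t - int s)))" .
qed

end

theorem proposition6p1:
  fixes JX :: "'x::banach \<Rightarrow>\<^sub>L 'x" and JY :: "'y::banach \<Rightarrow>\<^sub>L 'y"
    and A0 A1 F0 F1 :: "'x \<Rightarrow>\<^sub>L 'y"
    and R :: "complex \<Rightarrow> ('y \<Rightarrow>\<^sub>L 'x)"
    and T :: "int \<Rightarrow> ('y \<Rightarrow>\<^sub>L 'x)"
    and \<epsilon> \<theta> :: real
    and M :: "'a measure"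
    and n :: "int \<Rightarrow> 'a \<Rightarrow> 'x"
    and x :: "int \<Rightarrow> 'a \<Rightarrow> 'x"
    and c :: "'a \<Rightarrow> 'x"
  defines "A \<equiv> (\<lambda>z. A0 + cscale_op JY z A1)"
    and "U \<equiv> (\<lambda>s::nat. - (op_pow (op_inv (id_blinfun - (T (-1) o\<^sub>L (A0 + A1)))) (s + 1) o\<^sub>L T (-1)))"
    and "V \<equiv> (\<lambda>s::nat. ((-1::real) ^ s) *\<^sub>R
              (op_pow (op_inv (id_blinfun - (T 0 o\<^sub>L A1))) (s + 1) o\<^sub>L op_pow (T 0 o\<^sub>L A1) s o\<^sub>L T 0))"
    and "g \<equiv> (\<lambda>\<omega> t. blinfun_apply F0 (n t \<omega>) + blinfun_apply F1 (n (t - 1) \<omega>))"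
  assumes JX: "complex_structure JX" and JY: "complex_structure JY"
    and A0: "clinear_op JX JY A0" and A1: "clinear_op JX JY A1"
    and F0: "clinear_op JX JY F0" and F1: "clinear_op JX JY F1"
    and eps: "\<epsilon> > 0" and theta: "\<theta> > 0"
    and inv: "\<forall>z \<in> V_set \<epsilon> \<union> W_set \<theta>. R z o\<^sub>L A z = id_blinfun \<and> A z o\<^sub>L R z = id_blinfun"
    and analytic: "op_analytic_on JX R (V_set \<epsilon> \<union> W_set \<theta>)"
    and laurent: "\<forall>z. 0 < cmod (z - 1) \<and> cmod (z - 1) < \<epsilon> \<longrightarrow>
                    ((\<lambda>j. cscale_op JX ((z - 1) powi j) (T j)) has_sum R z) UNIV"
    and prob: "prob_space M"
    and n_meas: "\<forall>t. bochner_measurable M (n t)"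
    and n_indep: "prob_space.indep_vars M (\<lambda>_. borel) n UNIV"
    and n_ident: "\<forall>t. distr M borel (n t) = distr M borel (n 0)"
    and n_sq: "\<forall>t. integrable M (\<lambda>\<omega>. (norm (n t \<omega>))\<^sup>2)"
    and n_mean: "\<forall>t. bochner_integral_is M (n t) 0"
    and x_rv: "\<forall>t \<ge> -1. bochner_measurable M (x t)"
    and x_init: "\<forall>\<omega> \<in> space M. x (-1) \<omega> = c \<omega>"
    and x_rec: "\<forall>\<omega> \<in> space M. \<forall>t \<ge> 0.
                  blinfun_apply A0 (x t \<omega>) + blinfun_apply A1 (x (t - 1) \<omega>) = g \<omega> t"
  shows "\<forall>\<omega> \<in> space M. \<forall>t::nat.
     summable (\<lambda>m. ((-1::real) ^ Suc m) *\<^sub>R blinfun_apply (T (- int (Suc m))) (nabla_neg (g \<omega>) (Suc m) t)) \<and>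
     summable (\<lambda>l. ((-1::real) ^ l) *\<^sub>R blinfun_apply (T (int l)) (nabla_pos_plus (g \<omega>) l t)) \<and>
     x (int t) \<omega> =
       (\<Sum>m. ((-1::real) ^ Suc m) *\<^sub>R blinfun_apply (T (- int (Suc m))) (nabla_neg (g \<omega>) (Suc m) t))
       - blinfun_apply (U t) (blinfun_apply A1 (c \<omega>))
       + (\<Sum>l. ((-1::real) ^ l) *\<^sub>R blinfun_apply (T (int l)) (nabla_pos_plus (g \<omega>) l t))
       - blinfun_apply (V t) (blinfun_apply A1 (c \<omega>))"
proof -
  have JX': "cstruct JX" by (rule complex_structure_cstruct[OF JX])
  have JY': "cstruct JY" by (rule complex_structure_cstruct[OF JY])
  interpret S: setting JX JY A0 A1 R T \<epsilon> \<theta>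
    by unfold_locales (use JX' JY' A0 A1 eps theta inv analytic laurent in \<open>simp_all add: A_def\<close>)
  show ?thesis
  proof (intro ballI allI)
    fix \<omega> t assume \<omega>: "\<omega> \<in> space M"
    define G where "G = g \<omega>"
    have x0: "x (-1) \<omega> = c \<omega>" using x_init \<omega> by simp
    have xr: "\<And>t. t \<ge> 0 \<Longrightarrow> blinfun_apply A0 (x t \<omega>) + blinfun_apply A1 (x (t - 1) \<omega>) = G t"
      using x_rec \<omega> by (simp add: G_def)
    have sol: "x (int t) \<omega> = (\<Sum>s=0..t. blinfun_apply (S.KK s) (G (int t - int s))) - blinfun_apply (S.KK t) (blinfun_apply A1 (c \<omega>))"
      by (rule S.solution[of "\<lambda>t. x t \<omega>", OF x0 xr])
    have U: "U t = S.Sneg t" unfolding U_def S.Sneg_closed ..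
    have V: "V t = S.Spos t" unfolding V_def S.Spos_closed ..
    note ns = S.neg_series[of G t] and ps = S.pos_series[of G t]
    have eq: "x (int t) \<omega> =
       (\<Sum>m. ((-1::real) ^ Suc m) *\<^sub>R blinfun_apply (T (- int (Suc m))) (nabla_neg G (Suc m) t))
       - blinfun_apply (U t) (blinfun_apply A1 (c \<omega>))
       + (\<Sum>l. ((-1::real) ^ l) *\<^sub>R blinfun_apply (T (int l)) (nabla_pos_plus G l t))
       - blinfun_apply (V t) (blinfun_apply A1 (c \<omega>))"
      unfolding sol ns(2) ps(2) U V S.KK_def
      by (simp add: blinfun.add_left sum.distrib algebra_simps)
    show "summable (\<lambda>m. ((-1::real) ^ Suc m) *\<^sub>R blinfun_apply (T (- int (Suc m))) (nabla_neg (g \<omega>) (Suc m) t)) \<and>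
     summable (\<lambda>l. ((-1::real) ^ l) *\<^sub>R blinfun_apply (T (int l)) (nabla_pos_plus (g \<omega>) l t)) \<and>
     x (int t) \<omega> =
       (\<Sum>m. ((-1::real) ^ Suc m) *\<^sub>R blinfun_apply (T (- int (Suc m))) (nabla_neg (g \<omega>) (Suc m) t))
       - blinfun_apply (U t) (blinfun_apply A1 (c \<omega>))
       + (\<Sum>l. ((-1::real) ^ l) *\<^sub>R blinfun_apply (T (int l)) (nabla_pos_plus (g \<omega>) l t))
       - blinfun_apply (V t) (blinfun_apply A1 (c \<omega>))"
      using ns(1) ps(1) eq unfolding G_def by blast
  qed
qed

end
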